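(* For every $t\in[T]$ and every $x\in\mathbb R^d$ with $\|x\|_2\le1$, the estimates produced by Algorithm 1 satisfy $$\max_{A\in\mathcal A}\mathbb E\Big[\sum_{k=1}^K\langle x,\hat\theta_{t,k}-\tilde\theta_{t,k}\rangle(A)_k\,\Big|\,\mathcal F_{t-1}\Big]\le \frac{m}{t^2}.$$
   Context: Fix integers $K\ge2$, $1\le m<K$, $d\ge1$ and a horizon $T\ge3$. Let $\mathcal A=\{A\in\{0,1\}^K:\sum_{k=1}^K(A)_k\le m\}$, where $(A)_k$ denotes the $k$-th coordinate, and let $\mathrm{conv}(\mathcal A)$ be its convex hull. Contexts are drawn i.i.d. from a distribution $\mathcal D$ on $\mathbb R^d$ with $\|X\|_2\le1$ almost surely and $\Sigma=\mathbb E[XX^\top]\succ0$; $\lambda_{\min}(\Sigma)$ is its smallest eigenvalue. Protocol: in each round $t=1,\dots,T$ the environment fixes vectors $\theta_{t,1},\dots,\theta_{t,K}\in\mathbb R^d$ with $\|\theta_{t,k}\|_2\le1$ (not depending on the learner's actions), a context $X_t\sim\mathcal D$ is drawn independently of the past, the learner observes $X_t$, plays $A_t\in\mathcal A$, suffers $\sum_k\ell_t(X_t,k)(A_t)_k$ and observes $\ell_t(X_t,k)$ for every $k$ with $(A_t)_k=1$; all losses satisfy $\ell_t(x,k)\in[-1,1]$. Let $\mathcal F_t=\sigma(X_1,A_1,\dots,X_t,A_t)$ and $H(a)=-\sum_{k=1}^K a_k\ln a_k$ (with $0\ln 0=0$) for $a\in\mathrm{conv}(\mathcal A)$. Parameters: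 $c_1=\sqrt{(d+\ln T/\lambda_{\min}(\Sigma))K\ln T/(m\ln(K/m))}$, assumed $\ge1$; $c_2=8K/\lambda_{\min}(\Sigma)$; $\beta'_1=c_1$ and $\beta'_{t+1}=\beta'_t+c_1\big(1+(m\ln(K/m))^{-1}\sum_{s=1}^tH(\bar A_s(X_s))\big)^{-1/2}$; $\beta_t=\max\{2,c_2\ln T,\beta'_t\}$; $\eta_t=1/\beta_t$; $\alpha_t=4K\ln(t)/\lambda_{\min}(\Sigma)$; $\gamma_t=\alpha_t\eta_t$; $M_t=\lceil 4K\ln(t)/(\gamma_t\lambda_{\min}(\Sigma))\rceil=\lceil 1/\eta_t\rceil$ (the latter expression also used at $t=1$); $E=\{e_1,\dots,e_K\}\subseteq\mathcal A$ the standard basis vectors. Algorithm 1: set $\tilde\theta_{0,k}=0$. In round $t$: for a context $x$ let $\bar A_t(x)\in\arg\min_{a\in\mathrm{conv}(\mathcal A)}\{\sum_{s=1}^{t-1}\sum_{k}\langle x,\tilde\theta_{s,k}\rangle a_k-H(a)/\eta_t\}$; let $p_t(\cdot|x)$ be any distribution on $\mathcal A$ with $\sum_a p_t(a|x)\,a=\bar A_t(x)$; let $\pi_t(a|x)=(1-\gamma_t)p_t(a|x)+\gamma_t\mathbf 1[a\in E]/K$; sample $A_t\sim\pi_t(\cdot|X_t)$. Then draw $M_t$ fresh independent pairs $X(n)\sim\mathcal D$, $A(n)\sim\pi_t(\cdot|X(n))$, set $C_{n,k}=\prod_{j=1}^n\big(I-(A(j))_kX(j)X(j)^\top/2\big)$,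 $\widehat\Sigma^+_{t,k}=\big(I+\sum_{n=1}^{M_t}C_{n,k}\big)/2$, and $\tilde\theta_{t,k}=\widehat\Sigma^+_{t,k}X_t\,\ell_t(X_t,k)(A_t)_k$ for all $k\in[K]$. Unbiased reference estimator: $\Sigma_{t,k}=\mathbb E[(A_t)_kX_tX_t^\top\mid\mathcal F_{t-1}]$ and $\hat\theta_{t,k}=\Sigma_{t,k}^{-1}X_t\,\ell_t(X_t,k)(A_t)_k$. *)

theory Defs
  imports "HOL-Probability.Probability"
begin

text \<open>Actions are 0/1 vectors indexed by a finite type 'k with CARD('k) = K.\<close>
definition actions :: "nat \<Rightarrow> (real^'k) set" where
  "actions m = {A. (\<forall>k. A$k = 0 \<or> A$k = 1) \<and> (\<Sum>k\<in>UNIV. A$k) \<le> real m}"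

definition basis_actions :: "(real^'k) set" where
  "basis_actions = {axis k 1 | k. True}"

definition ent :: "real^'k \<Rightarrow> real" where
  "ent a = - (\<Sum>k\<in>UNIV. if a$k = 0 then 0 else a$k * ln (a$k))"

definition lambda_min :: "real^'n^'n \<Rightarrow> real" where
  "lambda_min M = Min {l. \<exists>v. v \<noteq> 0 \<and> M *v v = l *\<^sub>R v}"

definition outer :: "real^'d \<Rightarrow> real^'d^'d" where
  "outer x = (\<chi> i j. x$i * x$j)"

definition second_moment :: "(real^'d) measure \<Rightarrow> real^'d^'d" where
  "second_moment D = (\<chi> i j. \<integral>x. x$i * x$j \<partial>D)"

definition c1 :: "real \<Rightarrow> nat \<Rightarrow> nat \<Rightarrow> nat \<Rightarrow> nat \<Rightarrow> real" where
  "c1 lam d K m T =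
     sqrt ((real d + ln (real T) / lam) * real K * ln (real T) / (real m * ln (real K / real m)))"

definition c2 :: "real \<Rightarrow> nat \<Rightarrow> real" where
  "c2 lam K = 8 * real K / lam"

definition beta_of :: "real \<Rightarrow> nat \<Rightarrow> nat \<Rightarrow> real \<Rightarrow> real" where
  "beta_of lam K T b = max (max 2 (c2 lam K * ln (real T))) b"

text \<open>th s k is the estimate tilde-theta_{s,k} of round s, Xs s the context of round s.\<close>
definition reg_obj ::
  "(nat \<Rightarrow> 'k::finite \<Rightarrow> real^'d) \<Rightarrow> nat \<Rightarrow> real \<Rightarrow> real^'d \<Rightarrow> real^'k \<Rightarrow> real" where
  "reg_obj th t eta x a = (\<Sum>s\<in>{1..<t}. \<Sum>k\<in>UNIV. (x \<bullet> th s k) * a$k) - ent a / eta"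

definition abar ::
  "nat \<Rightarrow> (nat \<Rightarrow> 'k::finite \<Rightarrow> real^'d) \<Rightarrow> nat \<Rightarrow> real \<Rightarrow> real^'d \<Rightarrow> real^'k" where
  "abar m th t eta x = (SOME a. a \<in> convex hull (actions m) \<and>
      (\<forall>b \<in> convex hull (actions m). reg_obj th t eta x a \<le> reg_obj th t eta x b))"

text \<open>bstate n = (beta'_{n+1}, sum_{s=1}^n H(abar_s(X_s))).\<close>
fun bstate :: "real \<Rightarrow> nat \<Rightarrow> nat \<Rightarrow> (nat \<Rightarrow> real^'d) \<Rightarrow> (nat \<Rightarrow> 'k::finite \<Rightarrow> real^'d)
    \<Rightarrow> nat \<Rightarrow> real \<times> real" where
  "bstate lam m T Xs th 0 = (c1 lam CARD('d) CARD('k) m T, 0)"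
| "bstate lam m T Xs th (Suc n) =
     (let b = fst (bstate lam m T Xs th n);
          S = snd (bstate lam m T Xs th n) +
              ent (abar m th (Suc n) (1 / beta_of lam CARD('k) T b) (Xs (Suc n)))
      in (b + c1 lam CARD('d) CARD('k) m T / sqrt (1 + S / (real m * ln (real CARD('k) / real m))), S))"

definition eta_t :: "real \<Rightarrow> nat \<Rightarrow> nat \<Rightarrow> (nat \<Rightarrow> real^'d) \<Rightarrow> (nat \<Rightarrow> 'k::finite \<Rightarrow> real^'d)
    \<Rightarrow> nat \<Rightarrow> real" where
  "eta_t lam m T Xs th t = 1 / beta_of lam CARD('k) T (fst (bstate lam m T Xs th (t - 1)))"

definition alpha_t :: "real \<Rightarrow> nat \<Rightarrow> nat \<Rightarrow> real" where
  "alpha_t lam K t = 4 * real K * ln (real t) / lam"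

definition M_t :: "real \<Rightarrow> nat \<Rightarrow> nat \<Rightarrow> real \<Rightarrow> nat" where
  "M_t lam K t eta = (if t = 1 then nat \<lceil>1 / eta\<rceil>
      else nat \<lceil>4 * real K * ln (real t) / ((alpha_t lam K t * eta) * lam)\<rceil>)"

definition mix_policy ::
  "real \<Rightarrow> (real^'d \<Rightarrow> real^'k \<Rightarrow> real) \<Rightarrow> real^'d \<Rightarrow> real^'k \<Rightarrow> real" where
  "mix_policy gam p x a = (1 - gam) * p x a
      + gam * (if a \<in> basis_actions then 1 / real CARD('k) else 0)"

definition pair_law :: "(real^'d) measure \<Rightarrow> nat \<Rightarrow> (real^'d \<Rightarrow> real^'k \<Rightarrow> real)
    \<Rightarrow> ((real^'d) \<times> (real^'k)) measure" where
  "pair_law D m pol = density (D \<Otimes>\<^sub>M count_space (actions m)) (\<lambda>(x, a). ennreal (pol x a))"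

fun Cmat :: "'k::finite \<Rightarrow> (nat \<Rightarrow> (real^'d) \<times> (real^'k)) \<Rightarrow> nat \<Rightarrow> real^'d^'d" where
  "Cmat k w 0 = mat 1"
| "Cmat k w (Suc n) = Cmat k w n ** (mat 1 - ((snd (w (Suc n)))$k / 2) *\<^sub>R outer (fst (w (Suc n))))"

definition Sigma_hat_plus :: "nat \<Rightarrow> 'k::finite \<Rightarrow> (nat \<Rightarrow> (real^'d) \<times> (real^'k)) \<Rightarrow> real^'d^'d" where
  "Sigma_hat_plus M k w = (1/2) *\<^sub>R (mat 1 + (\<Sum>n\<in>{1..M}. Cmat k w n))"

text \<open>Sigma_{t,k} = E[(A_t)_k X_t X_t^T | F_{t-1}]\<close>
definition Sigma_tk :: "((real^'d) \<times> (real^'k)) measure \<Rightarrow> 'k \<Rightarrow> real^'d^'d" where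
  "Sigma_tk Q k = (\<chi> i j. \<integral>z. (snd z)$k * (fst z)$i * (fst z)$j \<partial>Q)"

end

theory Submission
  imports Defs "HOL-Real_Asymp.Real_Asymp"
begin


lemma sym_dot:
  fixes B :: "real^'n^'n"
  assumes "transpose B = B"
  shows "u \<bullet> (B *v v) = v \<bullet> (B *v u)"
proof -
  have "u \<bullet> (B *v v) = (u v* B) \<bullet> v" by (simp add: dot_lmul_matrix)
  also have "u v* B = transpose B *v u" by (simp add: transpose_matrix_vector)
  finally show ?thesis using assms by (simp add: inner_commute)
qed

lemma quad_expand:
  fixes B :: "real^'n^'n"
  assumes "transpose B = B"
  shows "(u + s *\<^sub>R v) \<bullet> (B *v (u + s *\<^sub>R v)) = u \<bullet> (B *v u) + 2 * s * (u \<bullet> (B *v v)) + s^2 * (v \<bullet> (B *v v))"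
proof -
  have "(u + s *\<^sub>R v) \<bullet> (B *v (u + s *\<^sub>R v)) = u \<bullet> (B *v u) + s * (u \<bullet> (B *v v)) + s * (v \<bullet> (B *v u)) + s^2 * (v \<bullet> (B *v v))"
    by (simp add: matrix_vector_right_distrib matrix_vector_mult_scaleR inner_add_left inner_add_right algebra_simps power2_eq_square)
  then show ?thesis using sym_dot[OF assms, of v u] by (simp add: power2_eq_square)
qed

lemma quad_nonneg_disc:
  fixes a b c :: real
  assumes "a \<ge> 0" "c \<ge> 0" "\<forall>s. a + 2 * s * b + s^2 * c \<ge> 0"
  shows "b^2 \<le> a * c"
proof (cases "c = 0")
  case True
  show ?thesis
  proof (cases "b = 0")
    case False
    have "a + 2 * (-(a+1)/(2*b)) * b + (-(a+1)/(2*b))^2 * c \<ge> 0" using assms(3) by blast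
    then have "a - (a+1) \<ge> 0" using False True by (simp add: field_simps)
    then show ?thesis by simp
  qed (use assms True in simp)
next
  case False
  then have c: "c > 0" using assms by simp
  have "a + 2 * (-b/c) * b + (-b/c)^2 * c \<ge> 0" using assms(3) by blast
  then have "a - b^2 / c \<ge> 0" using c by (simp add: field_simps power2_eq_square)
  then show ?thesis using c by (simp add: field_simps)
qed

lemma semi_cs:
  fixes B :: "real^'n^'n"
  assumes sym: "transpose B = B" and psd: "\<forall>v. 0 \<le> v \<bullet> (B *v v)"
  shows "(u \<bullet> (B *v v))^2 \<le> (u \<bullet> (B *v u)) * (v \<bullet> (B *v v))"
proof (rule quad_nonneg_disc)
  show "\<forall>s. 0 \<le> u \<bullet> (B *v u) + 2 * s * (u \<bullet> (B *v v)) + s\<^sup>2 * (v \<bullet> (B *v v))"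
    using psd quad_expand[OF sym] by metis
qed (use psd in auto)

lemma sym_norm_bound:
  fixes B :: "real^'n^'n"
  assumes sym: "transpose B = B" and c: "c \<ge> 0"
    and psd: "\<forall>v. 0 \<le> v \<bullet> (B *v v)" and up: "\<forall>v. v \<bullet> (B *v v) \<le> c * (v \<bullet> v)"
  shows "norm (B *v v) \<le> c * norm v"
proof -
  define w where "w = B *v v"
  have "(w \<bullet> w)^2 = (w \<bullet> (B *v v))^2" by (simp add: w_def)
  also have "\<dots> \<le> (w \<bullet> (B *v w)) * (v \<bullet> (B *v v))" by (rule semi_cs[OF sym psd])
  also have "\<dots> \<le> (c * (w \<bullet> w)) * (c * (v \<bullet> v))"
    by (intro mult_mono up[rule_format] psd[rule_format]) (use c in auto)
  finally have h: "(norm w ^ 2)^2 \<le> c^2 * norm w ^ 2 * norm v ^ 2"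
    by (simp add: dot_square_norm power2_eq_square algebra_simps)
  show ?thesis
  proof (cases "w = 0")
    case True then show ?thesis using c by (simp add: w_def)
  next
    case False
    then have "norm w ^ 2 > 0" by simp
    have h2: "(norm w ^ 2) * (norm w ^ 2) \<le> (c^2 * norm v ^ 2) * (norm w ^ 2)"
      using h by (simp add: power2_eq_square algebra_simps)
    have "norm w ^ 2 \<le> c^2 * norm v ^ 2"
      using mult_le_cancel_right_pos[OF \<open>norm w ^ 2 > 0\<close>] h2 by blast
    then have "norm w ^ 2 \<le> (c * norm v) ^ 2" by (simp add: power_mult_distrib)
    then show ?thesis unfolding w_def using c by (simp add: power2_le_iff_abs_le)
  qed
qed


lemma lin_quad_zero:
  fixes a b :: real
  assumes "\<forall>s. 2 * s * b + s^2 * a \<ge> 0"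
  shows "b = 0"
proof (rule ccontr)
  assume b: "b \<noteq> 0"
  define c where "c = \<bar>a\<bar> + 1"
  define s where "s = - b / (2 * c)"
  have pos: "c > 0" by (simp add: c_def)
  have "2 * s * b + s^2 * a \<ge> 0" using assms by blast
  also have "2 * s * b + s^2 * a = b^2 * (a / (4 * c^2) - 1 / c)"
    unfolding s_def using pos by (simp add: field_simps power2_eq_square)
  also have "\<dots> < 0"
  proof -
    have "a / (4 * c^2) \<le> \<bar>a\<bar> / (4 * c^2)" by (simp add: divide_right_mono)
    also have "\<dots> < 1 / c"
    proof -
      have "\<bar>a\<bar> < 4 * c" by (simp add: c_def)
      then have "\<bar>a\<bar> * c < (4*c) * c" using pos by (rule mult_strict_right_mono)
      then show ?thesis using pos by (simp add: field_simps power2_eq_square)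
    qed
    finally have "a / (4 * c^2) - 1 / c < 0" by simp
    moreover have "b^2 > 0" using b by simp
    ultimately show ?thesis by (simp add: mult_pos_neg)
  qed
  finally show False by simp
qed

lemma lambda_min_props:
  fixes S :: "real^'n^'n"
  assumes sym: "transpose S = S" and pd: "\<forall>v. v \<noteq> 0 \<longrightarrow> v \<bullet> (S *v v) > 0"
  shows "lambda_min S > 0" "\<And>v. lambda_min S * (v \<bullet> v) \<le> v \<bullet> (S *v v)"
proof -
  define E where "E = {l. \<exists>v. v \<noteq> 0 \<and> S *v v = l *\<^sub>R v}"
  have lm: "lambda_min S = Min E" unfolding lambda_min_def E_def ..
  define ev where "ev l = (SOME v. v \<noteq> 0 \<and> S *v v = l *\<^sub>R v)" for l
  have ev: "ev l \<noteq> 0 \<and> S *v ev l = l *\<^sub>R ev l" if "l \<in> E" for l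
    using that unfolding E_def ev_def by (rule CollectE) (rule someI_ex)
  have inj: "inj_on ev E"
  proof (rule inj_onI)
    fix l1 l2 assume "l1 \<in> E" "l2 \<in> E" "ev l1 = ev l2"
    then have "l1 *\<^sub>R ev l1 = l2 *\<^sub>R ev l1" using ev by metis
    then show "l1 = l2" using ev[OF \<open>l1 \<in> E\<close>] by (simp add: scaleR_cancel_right)
  qed
  have orth: "pairwise orthogonal (ev ` E)"
  proof (rule pairwiseI)
    fix u w assume "u \<in> ev ` E" "w \<in> ev ` E" "u \<noteq> w"
    then obtain l1 l2 where l: "l1 \<in> E" "l2 \<in> E" "u = ev l1" "w = ev l2" "l1 \<noteq> l2" by auto
    have "l1 * (u \<bullet> w) = (S *v u) \<bullet> w" using ev[OF l(1)] l(3) by simp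
    also have "\<dots> = w \<bullet> (S *v u)" by (simp add: inner_commute)
    also have "\<dots> = u \<bullet> (S *v w)" by (rule sym_dot[OF sym, symmetric])
    also have "\<dots> = l2 * (u \<bullet> w)" using ev[OF l(2)] l(4) by simp
    finally have "(l1 - l2) * (u \<bullet> w) = 0" by (simp add: algebra_simps)
    then show "orthogonal u w" using l(5) by (simp add: orthogonal_def)
  qed
  have finE: "finite E"
    using finite_imageD[OF pairwise_orthogonal_imp_finite[OF orth] inj] .
  have ne: "sphere (0::real^'n) 1 \<noteq> {}"
  proof -
    have "norm (axis undefined 1 :: real^'n) = 1" by simp
    then show ?thesis by (auto simp: sphere_def intro!: exI[of _ "axis undefined 1 :: real^'n"])
  qed
  have cont: "continuous_on (sphere 0 1) (\<lambda>v::real^'n. v \<bullet> (S *v v))"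
    by (intro continuous_intros matrix_vector_mult_linear_continuous_on)
  obtain v0 where v0: "v0 \<in> sphere 0 1" and min: "\<forall>y\<in>sphere 0 1. v0 \<bullet> (S *v v0) \<le> y \<bullet> (S *v y)"
    using continuous_attains_inf[OF compact_sphere ne cont] by blast
  define q where "q = v0 \<bullet> (S *v v0)"
  have nv0: "norm v0 = 1" using v0 by simp
  have v00: "v0 \<bullet> v0 = 1" using nv0 by (simp add: dot_square_norm)
  have ray: "q * (v \<bullet> v) \<le> v \<bullet> (S *v v)" for v
  proof (cases "v = 0")
    case True then show ?thesis by simp
  next
    case False
    define u where "u = (1 / norm v) *\<^sub>R v"
    have "u \<in> sphere 0 1" using False by (simp add: u_def)
    then have "q \<le> u \<bullet> (S *v u)" using min q_def by blast
    also have "u \<bullet> (S *v u) = (v \<bullet> (S *v v)) / (norm v)^2"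
      by (simp add: u_def matrix_vector_mult_scaleR power2_eq_square)
    finally have "q * (norm v)^2 \<le> v \<bullet> (S *v v)" using False by (simp add: field_simps)
    then show ?thesis by (simp add: dot_square_norm)
  qed
  have eig: "S *v v0 = q *\<^sub>R v0"
  proof -
    define r where "r = S *v v0 - q *\<^sub>R v0"
    have "\<forall>s. 2 * s * (r \<bullet> (S *v v0) - q * (r \<bullet> v0)) + s^2 * (r \<bullet> (S *v r) - q * (r \<bullet> r)) \<ge> 0"
    proof
      fix s
      have "q * ((v0 + s *\<^sub>R r) \<bullet> (v0 + s *\<^sub>R r)) \<le> (v0 + s *\<^sub>R r) \<bullet> (S *v (v0 + s *\<^sub>R r))" by (rule ray)
      also have "\<dots> = q + 2 * s * (v0 \<bullet> (S *v r)) + s^2 * (r \<bullet> (S *v r))"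
        using quad_expand[OF sym] q_def by simp
      also have "v0 \<bullet> (S *v r) = r \<bullet> (S *v v0)" by (rule sym_dot[OF sym])
      finally show "2 * s * (r \<bullet> (S *v v0) - q * (r \<bullet> v0)) + s^2 * (r \<bullet> (S *v r) - q * (r \<bullet> r)) \<ge> 0"
        using v00 by (simp add: inner_add_left inner_add_right power2_eq_square algebra_simps inner_commute)
    qed
    then have "r \<bullet> (S *v v0) - q * (r \<bullet> v0) = 0" by (rule lin_quad_zero)
    then have "r \<bullet> r = 0" by (simp add: r_def inner_diff_right)
    then show ?thesis by (simp add: r_def)
  qed
  have qE: "q \<in> E" unfolding E_def using eig nv0 by (auto intro!: exI[of _ v0])
  have "Min E \<le> q" using finE qE by simp
  moreover have "Min E \<in> E" using finE qE by (intro Min_in) auto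
  ultimately obtain w where w: "w \<noteq> 0" "S *v w = Min E *\<^sub>R w" "Min E \<le> q" unfolding E_def by auto
  have "0 < w \<bullet> (S *v w)" using pd w by blast
  also have "w \<bullet> (S *v w) = Min E * (w \<bullet> w)" using w by simp
  finally have "Min E > 0" using w inner_ge_zero[of w] by (simp add: zero_less_mult_iff)
  then show "lambda_min S > 0" using lm by simp
  show "lambda_min S * (v \<bullet> v) \<le> v \<bullet> (S *v v)" for v
  proof -
    have "Min E * (v \<bullet> v) \<le> q * (v \<bullet> v)" using w(3) by (simp add: mult_right_mono)
    then show ?thesis using ray[of v] lm by simp
  qed
qed


definition xlnx :: "real \<Rightarrow> real" where "xlnx s = (if s = 0 then 0 else s * ln s)"

lemma xlnx_lim0: "((\<lambda>x::real. x * ln x) \<longlongrightarrow> 0) (at_right 0)"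
  by real_asymp

lemma xlnx_cont: "continuous_on {0..} xlnx"
proof (rule continuous_on_eq_continuous_within[THEN iffD2], intro ballI)
  fix x :: real assume x: "x \<in> {0..}"
  show "continuous (at x within {0..}) xlnx"
  proof (cases "x = 0")
    case True
    have "at (0::real) within {0..} = at_right 0" by (rule at_within_Ici_at_right)
    moreover have "(xlnx \<longlongrightarrow> 0) (at_right 0)"
    proof (rule Lim_transform_eventually[OF xlnx_lim0])
      show "\<forall>\<^sub>F x in at_right 0. x * ln x = xlnx x"
        by (auto simp: xlnx_def eventually_at_right_less intro: eventually_mono[OF eventually_at_right_less])
    qed
    ultimately show ?thesis using True by (simp add: continuous_within xlnx_def)
  next
    case False
    then have xp: "x > 0" using x by simp
    have "isCont (\<lambda>s. s * ln s) x" using xp by (intro continuous_intros) auto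
    moreover have "\<forall>\<^sub>F s in nhds x. s * ln s = xlnx s"
      using eventually_nhds_in_open[of "{0<..}" x] xp
      by (auto simp: xlnx_def elim!: eventually_mono)
    ultimately have "isCont xlnx x" using isCont_cong[of "\<lambda>s. s * ln s" xlnx x] by simp
    then show ?thesis using continuous_at_imp_continuous_at_within by blast
  qed
qed

lemma xlnx_scale:
  assumes "0 \<le> y" "0 < e" "e \<le> 1"
  shows "xlnx ((1 - e) * y) \<le> (1 - e) * xlnx y"
proof (cases "y = 0 \<or> e = 1")
  case True then show ?thesis by (auto simp: xlnx_def)
next
  case False
  then have y: "y > 0" and e1: "1 - e > 0" using assms by auto
  have "ln ((1 - e) * y) = ln (1 - e) + ln y" using y e1 by (simp add: ln_mult)
  moreover have "ln (1 - e) \<le> 0" using e1 assms by simp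
  ultimately have "ln ((1 - e) * y) \<le> ln y" by simp
  then have "((1 - e) * y) * ln ((1 - e) * y) \<le> ((1 - e) * y) * ln y"
    using y e1 by (intro mult_left_mono) auto
  then show ?thesis using y e1 by (simp add: xlnx_def)
qed

lemma finite_actions: "finite (actions m :: (real^'k) set)"
proof -
  have "vec_nth ` {A::real^'k. \<forall>k. A$k \<in> {0,1}} \<subseteq> PiE UNIV (\<lambda>_. {0,1})"
    by (auto simp: PiE_def)
  then have "finite (vec_nth ` {A::real^'k. \<forall>k. A$k \<in> {0,1}})"
    by (rule finite_subset) (intro finite_PiE, auto)
  then have "finite {A::real^'k. \<forall>k. A$k \<in> {0,1}}"
    by (rule finite_imageD) (auto intro: inj_onI simp: vec_eq_iff)
  then show ?thesis by (rule finite_subset[rotated]) (auto simp: actions_def)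
qed

lemma axis_in_actions: "1 \<le> m \<Longrightarrow> (axis k 1 :: real^'k) \<in> actions m"
  by (auto simp: actions_def axis_def)

lemma actions_coord: "A \<in> actions m \<Longrightarrow> A$k = 0 \<or> A$k = 1"
  by (auto simp: actions_def)

lemma actions_nonempty: "(0::real^'k) \<in> actions m"
  by (auto simp: actions_def)

lemma hull_nonneg:
  assumes "a \<in> convex hull (actions m :: (real^'k) set)"
  shows "a$k \<ge> 0"
proof -
  have "convex {a::real^'k. a$k \<ge> 0}"
    by (auto simp: convex_def)
  moreover have "actions m \<subseteq> {a::real^'k. a$k \<ge> 0}"
    by (auto simp: actions_def) (metis order_refl zero_le_one)
  ultimately have "convex hull (actions m) \<subseteq> {a::real^'k. a$k \<ge> 0}"
    by (intro hull_minimal)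
  then show ?thesis using assms by auto
qed

lemma ent_xlnx: "ent a = - (\<Sum>k\<in>UNIV. xlnx (a$k))"
  by (simp add: ent_def xlnx_def)

lemma reg_obj_alt:
  "reg_obj th t eta x a = (\<Sum>k\<in>UNIV. (\<Sum>s\<in>{1..<t}. x \<bullet> th s k) * a$k) + (\<Sum>k\<in>UNIV. xlnx (a$k)) / eta"
  unfolding reg_obj_def ent_xlnx
  by (simp add: sum_distrib_right, rule sum.swap)

lemma abar_min:
  fixes th :: "nat \<Rightarrow> 'k::finite \<Rightarrow> real^'d"
  shows "abar m th t eta y \<in> convex hull (actions m) \<and>
     (\<forall>b \<in> convex hull (actions m). reg_obj th t eta y (abar m th t eta y) \<le> reg_obj th t eta y b)"
proof -
  let ?H = "convex hull (actions m :: (real^'k) set)"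
  have cpt: "compact ?H" by (intro compact_convex_hull finite_imp_compact finite_actions)
  have ne: "?H \<noteq> {}" using actions_nonempty hull_inc by fastforce
  have cont: "continuous_on ?H (reg_obj th t eta y)"
  proof -
    have c1: "continuous_on ?H (\<lambda>a. xlnx (a$k))" for k
    proof (rule continuous_on_compose2[OF xlnx_cont])
      show "continuous_on ?H (\<lambda>a::real^'k. a$k)" by (intro continuous_intros)
      show "(\<lambda>a::real^'k. a$k) ` ?H \<subseteq> {0..}" using hull_nonneg by fastforce
    qed
    show ?thesis unfolding reg_obj_alt divide_inverse
      by (intro continuous_intros c1)
  qed
  obtain a where "a \<in> ?H" "\<forall>b\<in>?H. reg_obj th t eta y a \<le> reg_obj th t eta y b"
    using continuous_attains_inf[OF cpt ne cont] by blast
  then have "\<exists>a. a \<in> ?H \<and> (\<forall>b\<in>?H. reg_obj th t eta y a \<le> reg_obj th t eta y b)" by blast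
  from someI_ex[OF this] show ?thesis unfolding abar_def .
qed

lemma abar_pos:
  fixes th :: "nat \<Rightarrow> 'k::finite \<Rightarrow> real^'d"
  assumes m: "1 \<le> m" and eta: "eta > 0"
  shows "abar m th t eta y $ k > 0"
proof (rule ccontr)
  let ?H = "convex hull (actions m :: (real^'k) set)"
  define a where "a = abar m th t eta y"
  have aH: "a \<in> ?H" and amin: "\<forall>b\<in>?H. reg_obj th t eta y a \<le> reg_obj th t eta y b"
    using abar_min[of m th t eta y] unfolding a_def by auto
  assume "\<not> abar m th t eta y $ k > 0"
  then have ak: "a$k = 0" using hull_nonneg[OF aH, of k] unfolding a_def by simp
  define c where "c j = (\<Sum>s\<in>{1..<t}. y \<bullet> th s j)" for j
  define L where "L b = (\<Sum>j\<in>UNIV. c j * b$j)" for b :: "real^'k"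
  define F where "F = (\<Sum>j\<in>UNIV. xlnx (a$j))"
  have obj: "reg_obj th t eta y b = L b + (\<Sum>j\<in>UNIV. xlnx (b$j)) / eta" for b
    unfolding reg_obj_alt L_def c_def ..
  define C where "C = F + eta * (L a - L (axis k 1))"
  define e where "e = min 1 (exp C / 2)"
  have e0: "e > 0" and e1: "e \<le> 1" by (auto simp: e_def)
  have lne: "ln e < C"
  proof -
    have "ln e \<le> ln (exp C / 2)" using e0 by (simp add: e_def)
    also have "\<dots> = C - ln 2" by (simp add: ln_div)
    moreover have "ln (2::real) > 0" by simp
    ultimately show ?thesis by linarith
  qed
  define b where "b = (1 - e) *\<^sub>R a + e *\<^sub>R axis k 1"
  have bH: "b \<in> ?H" unfolding b_def
    using convexD[OF convex_convex_hull aH hull_inc[OF axis_in_actions[OF m, of k]], of "1 - e" e] e0 e1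
    by simp
  have Lb: "L b = (1 - e) * L a + e * L (axis k 1)"
  proof -
    have "L b = (\<Sum>j\<in>UNIV. (1 - e) * (c j * a$j) + e * (c j * axis k 1 $ j))"
      unfolding L_def b_def by (intro sum.cong) (auto simp: algebra_simps)
    also have "\<dots> = (1 - e) * L a + e * L (axis k 1)"
      unfolding L_def by (simp add: sum.distrib sum_distrib_left)
    finally show ?thesis .
  qed
  have ent_b: "(\<Sum>j\<in>UNIV. xlnx (b$j)) \<le> e * ln e + (1 - e) * F"
  proof -
    have "(\<Sum>j\<in>UNIV. xlnx (b$j)) \<le> (\<Sum>j\<in>UNIV. (if j = k then e * ln e else 0) + (1 - e) * xlnx (a$j))"
    proof (rule sum_mono)
      fix j :: 'k
      show "xlnx (b$j) \<le> (if j = k then e * ln e else 0) + (1 - e) * xlnx (a$j)"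
      proof (cases "j = k")
        case True then show ?thesis using ak e0 by (simp add: b_def xlnx_def)
      next
        case False
        then have "b$j = (1 - e) * a$j" by (simp add: b_def axis_def)
        then show ?thesis using False xlnx_scale[OF hull_nonneg[OF aH] e0 e1, of j] by simp
      qed
    qed
    also have "\<dots> = e * ln e + (1 - e) * F"
      by (simp add: sum.distrib F_def sum_distrib_left)
    finally show ?thesis .
  qed
  have "reg_obj th t eta y b \<le> (1 - e) * L a + e * L (axis k 1) + (e * ln e + (1 - e) * F) / eta"
    unfolding obj Lb using ent_b eta by (simp add: divide_right_mono)
  also have "\<dots> = reg_obj th t eta y a + e * ((L (axis k 1) - L a) + (ln e - F) / eta)"
    unfolding obj F_def using eta by (simp add: field_simps)
  also have "\<dots> < reg_obj th t eta y a"
  proof -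
    have "(ln e - F) < eta * (L a - L (axis k 1))" using lne by (simp add: C_def)
    then have "(ln e - F) / eta < L a - L (axis k 1)" using eta by (simp add: field_simps)
    then have "(L (axis k 1) - L a) + (ln e - F) / eta < 0" by simp
    then show ?thesis using e0 by (simp add: mult_pos_neg)
  qed
  finally show False using amin bH by force
qed


lemma pol_meas:
  fixes D :: "'a measure" and A :: "'b set" and pol :: "'a \<Rightarrow> 'b \<Rightarrow> real"
  assumes A: "countable A" and pm: "\<And>a. (\<lambda>x. pol x a) \<in> borel_measurable D"
  shows "(\<lambda>z. pol (fst z) (snd z)) \<in> borel_measurable (D \<Otimes>\<^sub>M count_space A)"
proof -
  have "(\<lambda>z. pol (snd z) (fst z)) \<in> borel_measurable (count_space A \<Otimes>\<^sub>M D)"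
    by (rule measurable_pair_measure_countable1[OF A]) (simp add: pm)
  then have "(\<lambda>z. pol (snd z) (fst z)) \<circ> (\<lambda>(x, y). (y, x)) \<in> borel_measurable (D \<Otimes>\<^sub>M count_space A)"
    by (rule measurable_comp[OF measurable_pair_swap'])
  then show ?thesis by (simp add: comp_def case_prod_beta)
qed

lemma dens_eq: "(\<lambda>(x, a). ennreal (pol x a)) = (\<lambda>z. ennreal (pol (fst z) (snd z)))"
  by auto

locale Qsetup =
  fixes D :: "'a measure" and A :: "'b set" and pol :: "'a \<Rightarrow> 'b \<Rightarrow> real"
  assumes D: "prob_space D" and A: "finite A"
    and pi_nn: "\<And>x a. pol x a \<ge> 0"
    and pi_sum: "\<And>x. (\<Sum>a\<in>A. pol x a) = 1"
    and pi_m: "\<And>a. (\<lambda>x. pol x a) \<in> borel_measurable D"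
begin

definition "Q = density (D \<Otimes>\<^sub>M count_space A) (\<lambda>(x, a). ennreal (pol x a))"

lemma pi_le1: "a \<in> A \<Longrightarrow> pol x a \<le> 1"
  using member_le_sum[of a A "pol x"] pi_nn pi_sum A by auto

lemma g_meas: "(\<lambda>z. pol (fst z) (snd z)) \<in> borel_measurable (D \<Otimes>\<^sub>M count_space A)"
  using pol_meas[of A pol D] A pi_m by (simp add: countable_finite)

lemma Q_alt: "Q = density (D \<Otimes>\<^sub>M count_space A) (\<lambda>z. ennreal (pol (fst z) (snd z)))"
  unfolding Q_def dens_eq ..

interpretation PD: prob_space D by (rule D)

lemma fin_pair: "finite_measure (D \<Otimes>\<^sub>M count_space A)"
  by (intro finite_measure_pair_measure finite_measure_count_space A) (simp add: PD.finite_measure_axioms)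

lemma sfC: "sigma_finite_measure (count_space A)"
  by (intro finite_measure.sigma_finite_measure finite_measure_count_space A)

interpretation PS: pair_sigma_finite D "count_space A"
  by (intro pair_sigma_finite.intro PD.sigma_finite_measure_axioms finite_measure.sigma_finite_measure finite_measure_count_space A)

lemma Q_prob: "prob_space Q"
proof
  have "emeasure Q (space Q) = (\<integral>\<^sup>+ z. ennreal (pol (fst z) (snd z)) \<partial>(D \<Otimes>\<^sub>M count_space A))"
    unfolding Q_alt using g_meas by (simp add: emeasure_density nn_integral_density)
  also have "\<dots> = (\<integral>\<^sup>+ x. (\<integral>\<^sup>+ a. ennreal (pol x a) \<partial>count_space A) \<partial>D)"
    using sigma_finite_measure.nn_integral_fst[OF sfC, of "\<lambda>z. ennreal (pol (fst z) (snd z))" D] g_meas by simp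
  also have "\<dots> = (\<integral>\<^sup>+ x. 1 \<partial>D)"
    using A by (intro nn_integral_cong) (simp add: nn_integral_count_space_finite sum_ennreal pi_nn pi_sum)
  also have "\<dots> = 1" by (simp add: PD.emeasure_space_1)
  finally show "emeasure Q (space Q) = 1" .
qed

lemma space_Q: "space Q = space D \<times> A"
  by (simp add: Q_def space_pair_measure)

lemma sets_Q: "sets Q = sets (D \<Otimes>\<^sub>M count_space A)"
  by (simp add: Q_def)

lemma Q_AE:
  assumes ae: "AE x in D. P x" and Pm: "{x \<in> space D. P x} \<in> sets D"
  shows "AE z in Q. P (fst z)"
proof -
  have gm': "(\<lambda>z. ennreal (pol (fst z) (snd z))) \<in> borel_measurable (D \<Otimes>\<^sub>M count_space A)"
    using g_meas by measurable
  have *: "AE z in D \<Otimes>\<^sub>M count_space A. P (fst z)"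
  proof (rule PS.AE_pair_measure)
    have "{z \<in> space (D \<Otimes>\<^sub>M count_space A). P (fst z)} = {x \<in> space D. P x} \<times> A"
      by (auto simp: space_pair_measure)
    then show "{z \<in> space (D \<Otimes>\<^sub>M count_space A). P (fst z)} \<in> sets (D \<Otimes>\<^sub>M count_space A)"
      using Pm by simp
    show "AE x in D. AE y in count_space A. P (fst (x, y))" using ae by (rule AE_mp) (auto intro!: AE_I2)
  qed
  show ?thesis using * unfolding Q_alt AE_density[OF gm'] by eventually_elim auto
qed

lemma Q_int:
  fixes f :: "'a \<times> 'b \<Rightarrow> real"
  assumes fm: "f \<in> borel_measurable (D \<Otimes>\<^sub>M count_space A)"
    and bd: "AE x in D. \<forall>a\<in>A. \<bar>f (x, a)\<bar> \<le> B"
  shows "integrable Q f" "integral\<^sup>L Q f = (\<integral>x. (\<Sum>a\<in>A. pol x a * f (x, a)) \<partial>D)"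
proof -
  interpret FP: finite_measure "D \<Otimes>\<^sub>M count_space A" by (rule fin_pair)
  let ?g = "\<lambda>z. pol (fst z) (snd z)"
  have gm: "?g \<in> borel_measurable (D \<Otimes>\<^sub>M count_space A)" by (rule g_meas)
  have ae2: "AE z in D \<Otimes>\<^sub>M count_space A. norm (?g z *\<^sub>R f z) \<le> B"
  proof (rule PS.AE_pair_measure)
    show "{z \<in> space (D \<Otimes>\<^sub>M count_space A). norm (?g z *\<^sub>R f z) \<le> B} \<in> sets (D \<Otimes>\<^sub>M count_space A)"
      using gm fm by measurable
    show "AE x in D. AE y in count_space A. norm (?g (x, y) *\<^sub>R f (x, y)) \<le> B"
    proof -
      have pt: "AE y in count_space A. norm (?g (x, y) *\<^sub>R f (x, y)) \<le> B"
        if h: "\<forall>a\<in>A. \<bar>f (x, a)\<bar> \<le> B" for x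
      proof -
        have "norm (?g (x, y) *\<^sub>R f (x, y)) \<le> B" if y: "y \<in> A" for y
        proof -
          have "\<bar>pol x y * f (x, y)\<bar> = pol x y * \<bar>f (x, y)\<bar>" using pi_nn by (simp add: abs_mult)
          also have "\<dots> \<le> 1 * B"
            using h y pi_le1[OF y, of x] pi_nn[of x y] by (intro mult_mono) auto
          finally show ?thesis by simp
        qed
        then show ?thesis by (intro AE_I2) simp
      qed
      from bd show ?thesis by (rule eventually_mono) (rule pt)
    qed
  qed
  have int2: "integrable (D \<Otimes>\<^sub>M count_space A) (\<lambda>z. ?g z *\<^sub>R f z)"
    by (rule FP.integrable_const_bound[OF ae2]) (use gm fm in measurable)
  show "integrable Q f"
    unfolding Q_alt using integrable_density[OF fm gm] int2 pi_nn by simp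
  have "integral\<^sup>L Q f = integral\<^sup>L (D \<Otimes>\<^sub>M count_space A) (\<lambda>z. ?g z *\<^sub>R f z)"
    unfolding Q_alt using fm gm pi_nn by (subst integral_density) auto
  also have "\<dots> = (\<integral>x. (\<integral>a. ?g (x, a) *\<^sub>R f (x, a) \<partial>count_space A) \<partial>D)"
    by (rule PS.integral_fst'[OF int2, symmetric])
  also have "\<dots> = (\<integral>x. (\<Sum>a\<in>A. pol x a * f (x, a)) \<partial>D)"
    using A by (simp add: lebesgue_integral_count_space_finite)
  finally show "integral\<^sup>L Q f = (\<integral>x. (\<Sum>a\<in>A. pol x a * f (x, a)) \<partial>D)" .
qed

end


lemma prod_int:
  fixes f :: "'a \<Rightarrow> real" and h :: "'b \<Rightarrow> real"
  assumes M1: "sigma_finite_measure M1" and M2: "sigma_finite_measure M2"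
    and f: "integrable M1 f" and h: "integrable M2 h"
  shows "integrable (M1 \<Otimes>\<^sub>M M2) (\<lambda>\<omega>. f (fst \<omega>) * h (snd \<omega>))"
    "(\<integral>\<omega>. f (fst \<omega>) * h (snd \<omega>) \<partial>(M1 \<Otimes>\<^sub>M M2)) = integral\<^sup>L M1 f * integral\<^sup>L M2 h"
proof -
  interpret PS: pair_sigma_finite M1 M2 by (intro pair_sigma_finite.intro M1 M2)
  have fm[measurable]: "f \<in> borel_measurable M1" using f by auto
  have hm[measurable]: "h \<in> borel_measurable M2" using h by auto
  show int: "integrable (M1 \<Otimes>\<^sub>M M2) (\<lambda>\<omega>. f (fst \<omega>) * h (snd \<omega>))"
  proof (rule PS.Fubini_integrable)
    show "(\<lambda>\<omega>. f (fst \<omega>) * h (snd \<omega>)) \<in> borel_measurable (M1 \<Otimes>\<^sub>M M2)" by measurable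
    have "integrable M1 (\<lambda>x. \<bar>f x\<bar> * (\<integral>y. \<bar>h y\<bar> \<partial>M2))"
      using f by (intro integrable_mult_left) auto
    then show "integrable M1 (\<lambda>x. \<integral>y. norm (f (fst (x, y)) * h (snd (x, y))) \<partial>M2)"
      by (simp add: abs_mult)
    show "AE x in M1. integrable M2 (\<lambda>y. f (fst (x, y)) * h (snd (x, y)))"
      using h by (intro AE_I2) simp
  qed
  have "(\<integral>\<omega>. f (fst \<omega>) * h (snd \<omega>) \<partial>(M1 \<Otimes>\<^sub>M M2)) = (\<integral>x. (\<integral>y. f x * h y \<partial>M2) \<partial>M1)"
    using PS.integral_fst'[OF int] by simp
  also have "\<dots> = (\<integral>x. f x * integral\<^sup>L M2 h \<partial>M1)" by simp
  also have "\<dots> = integral\<^sup>L M1 f * integral\<^sup>L M2 h" by simp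
  finally show "(\<integral>\<omega>. f (fst \<omega>) * h (snd \<omega>) \<partial>(M1 \<Otimes>\<^sub>M M2)) = integral\<^sup>L M1 f * integral\<^sup>L M2 h" .
qed

definition Gm :: "'k::finite \<Rightarrow> (real^'d) \<times> (real^'k) \<Rightarrow> real^'d^'d" where
  "Gm k z = mat 1 - ((snd z)$k / 2) *\<^sub>R outer (fst z)"

lemma Cmat_Suc: "Cmat k w (Suc n) = Cmat k w n ** Gm k (w (Suc n))"
  by (simp add: Gm_def)

declare Cmat.simps(2)[simp del]

lemma Cmat_local: "(\<forall>l\<in>{1..n}. w l = w' l) \<Longrightarrow> Cmat k w n = Cmat k w' n"
  by (induction n) (auto simp: Cmat_Suc)

fun mpow :: "real^'d^'d \<Rightarrow> nat \<Rightarrow> real^'d^'d" where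
  "mpow B 0 = mat 1"
| "mpow B (Suc n) = mpow B n ** B"

lemma entry_bound:
  fixes C :: "real^'d^'d"
  assumes "\<forall>v. norm (C *v v) \<le> norm v"
  shows "\<bar>C $ i $ j\<bar> \<le> 1"
proof -
  have "C $ i $ j = (C *v axis j 1) $ i"
    by (simp add: matrix_vector_mult_def axis_def if_distrib cong: if_cong)
  then have "\<bar>C $ i $ j\<bar> \<le> norm (C *v axis j 1)" using component_le_norm_cart by metis
  also have "\<dots> \<le> 1" using assms[rule_format, of "axis j 1"] by simp
  finally show ?thesis .
qed

lemma Cmat_norm:
  assumes "\<forall>l\<in>{1..n}. \<forall>v. norm (Gm k (w l) *v v) \<le> norm v"
  shows "norm (Cmat k w n *v v) \<le> norm v"
  using assms
proof (induction n arbitrary: v)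
  case 0 then show ?case by simp
next
  case (Suc n)
  have "norm (Cmat k w (Suc n) *v v) = norm (Cmat k w n *v (Gm k (w (Suc n)) *v v))"
    by (simp add: Cmat_Suc matrix_vector_mul_assoc)
  also have "\<dots> \<le> norm (Gm k (w (Suc n)) *v v)" using Suc by auto
  also have "\<dots> \<le> norm v" using Suc.prems by auto
  finally show ?case .
qed

locale Psetup =
  fixes Q :: "((real^'d) \<times> (real^'k::finite)) measure" and k :: 'k and EG :: "real^'d^'d"
  assumes Q: "prob_space Q"
    and Gmeas: "\<And>i j. (\<lambda>z. Gm k z $ i $ j) \<in> borel_measurable Q"
    and Gint: "\<And>i j. integrable Q (\<lambda>z. Gm k z $ i $ j)"
    and GE: "\<And>i j. (\<integral>z. Gm k z $ i $ j \<partial>Q) = EG $ i $ j"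
    and Gbd: "AE z in Q. \<forall>v. norm (Gm k z *v v) \<le> norm v"
begin

interpretation PQ: prob_space Q by (rule Q)
interpretation PP: product_prob_space "(\<lambda>_. Q) :: nat \<Rightarrow> _" by (intro product_prob_spaceI Q)

lemma PiM_prob: "prob_space (PiM (I::nat set) (\<lambda>_. Q))"
  by (rule prob_space_PiM) (simp add: Q)

lemma Cmat_meas:
  assumes "{1..n} \<subseteq> I"
  shows "(\<lambda>w. Cmat k w n $ i $ j) \<in> borel_measurable (PiM I (\<lambda>_. Q))"
  using assms
proof (induction n arbitrary: i j)
  case 0 then show ?case by simp
next
  case (Suc n)
  have I: "Suc n \<in> I" "{1..n} \<subseteq> I" using Suc.prems by auto
  have m1: "(\<lambda>w. Cmat k w n $ i $ l) \<in> borel_measurable (PiM I (\<lambda>_. Q))" for l using Suc.IH[OF I(2)] .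
  have m2: "(\<lambda>w. Gm k (w (Suc n)) $ l $ j) \<in> borel_measurable (PiM I (\<lambda>_. Q))" for l
    using measurable_comp[OF measurable_component_singleton[OF I(1), of "\<lambda>_. Q"] Gmeas[of l j]]
    by (simp add: comp_def)
  show ?case unfolding Cmat_Suc matrix_matrix_mult_def
    using m1 m2 by simp
qed

lemma Cmat_AEbd:
  assumes "finite I" "{1..n} \<subseteq> I"
  shows "AE w in PiM I (\<lambda>_. Q). \<forall>v. norm (Cmat k w n *v v) \<le> norm v"
proof -
  have "AE w in PiM I (\<lambda>_. Q). \<forall>l\<in>{1..n}. \<forall>v. norm (Gm k (w l) *v v) \<le> norm v"
  proof (rule AE_finite_allI)
    fix l assume "l \<in> {1..n}"
    then have "l \<in> I" using assms by auto
    then show "AE w in PiM I (\<lambda>_. Q). \<forall>v. norm (Gm k (w l) *v v) \<le> norm v"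
      using AE_PiM_component[of I "\<lambda>_. Q" l "\<lambda>z. \<forall>v. norm (Gm k z *v v) \<le> norm v"] Q Gbd by simp
  qed simp
  then show ?thesis by (rule eventually_mono) (rule allI, rule Cmat_norm)
qed

lemma Cmat_int:
  assumes "finite I" "{1..n} \<subseteq> I"
  shows "integrable (PiM I (\<lambda>_. Q)) (\<lambda>w. Cmat k w n $ i $ j)"
proof -
  show ?thesis
  proof (rule finite_measure.integrable_const_bound[OF prob_space.finite_measure[OF PiM_prob], where B=1])
    show "AE w in PiM I (\<lambda>_. Q). norm (Cmat k w n $ i $ j) \<le> 1"
      using Cmat_AEbd[OF assms] by (rule eventually_mono) (simp add: entry_bound)
    show "(\<lambda>w. Cmat k w n $ i $ j) \<in> borel_measurable (PiM I (\<lambda>_. Q))" by (rule Cmat_meas[OF assms(2)])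
  qed
qed

lemma Cmat_exp:
  assumes "finite I" "{1..n} \<subseteq> I"
  shows "(\<integral>w. Cmat k w n $ i $ j \<partial>PiM I (\<lambda>_. Q)) = mpow EG n $ i $ j"
  using assms
proof (induction n arbitrary: I i j)
  case 0
  show ?case using prob_space.prob_space[OF PiM_prob[of I]] by (simp add: mat_def)
next
  case (Suc n)
  define I' where "I' = I - {Suc n}"
  have II: "I = insert (Suc n) I'" "finite I'" "Suc n \<notin> I'" "{1..n} \<subseteq> I'"
    using Suc.prems by (auto simp: I'_def)
  let ?F = "\<lambda>w. Cmat k w (Suc n) $ i $ j"
  have int: "integrable (PiM (insert (Suc n) I') (\<lambda>_. Q)) ?F"
    using Cmat_int[OF Suc.prems] II(1) by simp
  have "(\<integral>w. ?F w \<partial>PiM I (\<lambda>_. Q)) = (\<integral>x. (\<integral>y. ?F (x(Suc n := y)) \<partial>Q) \<partial>PiM I' (\<lambda>_. Q))"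
    unfolding II(1) by (rule PP.product_integral_insert[OF II(2,3) int])
  also have "\<dots> = (\<integral>x. (\<Sum>l\<in>UNIV. Cmat k x n $ i $ l * EG $ l $ j) \<partial>PiM I' (\<lambda>_. Q))"
  proof -
    have eq: "(\<integral>y. ?F (x(Suc n := y)) \<partial>Q) = (\<Sum>l\<in>UNIV. Cmat k x n $ i $ l * EG $ l $ j)" for x
    proof -
      have loc: "Cmat k (x(Suc n := y)) n = Cmat k x n" for y
        by (rule Cmat_local) auto
      have "(\<integral>y. ?F (x(Suc n := y)) \<partial>Q) = (\<integral>y. (\<Sum>l\<in>UNIV. Cmat k x n $ i $ l * Gm k y $ l $ j) \<partial>Q)"
        by (simp add: Cmat_Suc matrix_matrix_mult_def loc)
      also have "\<dots> = (\<Sum>l\<in>UNIV. Cmat k x n $ i $ l * EG $ l $ j)"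
        by (simp add: Gint GE)
      finally show ?thesis .
    qed
    show ?thesis by (simp only: eq)
  qed
  also have "\<dots> = (\<Sum>l\<in>UNIV. mpow EG n $ i $ l * EG $ l $ j)"
    using Cmat_int[OF II(2,4)] Suc.IH[OF II(2,4)] by simp
  also have "\<dots> = mpow EG (Suc n) $ i $ j" by (simp add: matrix_matrix_mult_def)
  finally show ?case .
qed

end


locale Msetup = Qsetup D "actions m" pol
  for D :: "(real^'d) measure" and m :: nat and pol :: "real^'d \<Rightarrow> real^'k::finite \<Rightarrow> real" +
  fixes g0 lam :: real
  assumes D_sets: "sets D = sets borel"
    and D_bdd: "AE y in D. norm y \<le> 1"
    and wpos: "\<And>x k. (\<Sum>a\<in>actions m. pol x a * a$k) > 0"
    and wlow: "\<And>x k. (\<Sum>a\<in>actions m. pol x a * a$k) \<ge> g0"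
    and g0: "g0 \<ge> 0"
    and lam_ray: "\<And>v. lam * (v \<bullet> v) \<le> v \<bullet> (second_moment D *v v)"
    and Spd: "\<And>v. v \<noteq> 0 \<Longrightarrow> v \<bullet> (second_moment D *v v) > 0"
begin

interpretation PD: prob_space D by (rule D)
interpretation PQ: prob_space Q by (rule Q_prob)

lemma Dmeas: "f \<in> borel_measurable borel \<Longrightarrow> f \<in> borel_measurable D"
  using measurable_cong_sets[OF D_sets refl] by blast

lemma pair_meas:
  fixes f :: "(real^'d) \<times> (real^'k) \<Rightarrow> real"
  assumes "\<And>a. (\<lambda>x. f (x, a)) \<in> borel_measurable borel"
  shows "f \<in> borel_measurable (D \<Otimes>\<^sub>M count_space (actions m))"
proof -
  have "(\<lambda>z. (\<lambda>x a. f (x, a)) (fst z) (snd z)) \<in> borel_measurable (D \<Otimes>\<^sub>M count_space (actions m))"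
    by (rule pol_meas[OF countable_finite[OF finite_actions]]) (rule Dmeas[OF assms])
  then show ?thesis by simp
qed

lemma Q_meas:
  fixes f :: "(real^'d) \<times> (real^'k) \<Rightarrow> real"
  assumes "\<And>a. (\<lambda>x. f (x, a)) \<in> borel_measurable borel"
  shows "f \<in> borel_measurable Q"
  using pair_meas[OF assms] measurable_cong_sets[OF sets_Q refl] by blast

lemma D_ball: "{x \<in> space D. norm x \<le> 1} \<in> sets D"
proof -
  have "(\<lambda>x::real^'d. norm x) \<in> borel_measurable D" by (rule Dmeas) simp
  then show ?thesis by measurable
qed

lemma QAE: "AE z in Q. norm (fst z) \<le> 1"
  by (rule Q_AE[OF D_bdd D_ball])

lemma D_int:
  fixes f :: "real^'d \<Rightarrow> real"
  assumes fm: "f \<in> borel_measurable borel" and bd: "\<And>x. norm x \<le> 1 \<Longrightarrow> \<bar>f x\<bar> \<le> B"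
  shows "integrable D f"
proof (rule PD.integrable_const_bound[where B=B])
  show "AE x in D. norm (f x) \<le> B" using D_bdd by (rule eventually_mono) (simp add: bd)
  show "f \<in> borel_measurable D" by (rule Dmeas[OF fm])
qed

lemma Q_int2:
  fixes f :: "(real^'d) \<times> (real^'k) \<Rightarrow> real"
  assumes fm: "\<And>a. (\<lambda>x. f (x, a)) \<in> borel_measurable borel"
    and bd: "\<And>x a. norm x \<le> 1 \<Longrightarrow> a \<in> actions m \<Longrightarrow> \<bar>f (x, a)\<bar> \<le> B"
  shows "integrable Q f" "integral\<^sup>L Q f = (\<integral>x. (\<Sum>a\<in>actions m. pol x a * f (x, a)) \<partial>D)"
proof -
  have "AE x in D. \<forall>a\<in>actions m. \<bar>f (x, a)\<bar> \<le> B" using D_bdd by (rule eventually_mono) (simp add: bd)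
  then show "integrable Q f" "integral\<^sup>L Q f = (\<integral>x. (\<Sum>a\<in>actions m. pol x a * f (x, a)) \<partial>D)"
    using Q_int[OF pair_meas[OF fm]] by auto
qed

lemma sq_sum: "(\<Sum>i\<in>I. f i)^2 = (\<Sum>i\<in>I. \<Sum>j\<in>I. f i * (f j :: real))"
  by (simp add: power2_eq_square sum_product)

lemma inner_sq: "(v \<bullet> x)^2 = (\<Sum>i\<in>UNIV. \<Sum>j\<in>UNIV. v$i * v$j * (x$i * x$j))" for v x :: "real^'d"
  unfolding inner_vec_def sq_sum by (intro sum.cong refl) (simp add: algebra_simps)

lemma quad_form: "v \<bullet> (S *v v) = (\<Sum>i\<in>UNIV. \<Sum>j\<in>UNIV. v$i * v$j * S$i$j)" for v :: "real^'d" and S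
  by (simp add: inner_vec_def matrix_vector_mult_def sum_distrib_left algebra_simps)

lemma entry_int: "integrable D (\<lambda>x. h x * (x$i * x$j))"
  if "h \<in> borel_measurable borel" "\<And>x. \<bar>h x\<bar> \<le> 1" for h :: "real^'d \<Rightarrow> real"
proof (rule D_int[where B=1])
  show "(\<lambda>x. h x * (x$i * x$j)) \<in> borel_measurable borel" using that by measurable
  fix x :: "real^'d" assume x: "norm x \<le> 1"
  have "\<bar>x$i\<bar> \<le> 1" "\<bar>x$j\<bar> \<le> 1" using component_le_norm_cart[of x] x by (meson order_trans)+
  then show "\<bar>h x * (x$i * x$j)\<bar> \<le> 1" using that(2)[of x]
    by (simp add: abs_mult mult_le_one)
qed

lemma quad_integral:
  fixes h :: "real^'d \<Rightarrow> real" and S :: "real^'d^'d"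
  assumes hm: "h \<in> borel_measurable borel" and hb: "\<And>x. \<bar>h x\<bar> \<le> 1"
    and S: "\<And>i j. S$i$j = (\<integral>x. h x * (x$i * x$j) \<partial>D)"
  shows "v \<bullet> (S *v v) = (\<integral>x. h x * (v \<bullet> x)^2 \<partial>D)"
proof -
  have "v \<bullet> (S *v v) = (\<Sum>i\<in>UNIV. \<Sum>j\<in>UNIV. (\<integral>x. v$i * v$j * (h x * (x$i * x$j)) \<partial>D))"
    unfolding quad_form S by simp
  also have "\<dots> = (\<integral>x. (\<Sum>i\<in>UNIV. \<Sum>j\<in>UNIV. v$i * v$j * (h x * (x$i * x$j))) \<partial>D)"
    using entry_int[OF hm hb] by (simp add: integral_sum integrable_sum)
  also have "\<dots> = (\<integral>x. h x * (v \<bullet> x)^2 \<partial>D)"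
    unfolding inner_sq by (simp add: sum_distrib_left algebra_simps)
  finally show ?thesis .
qed

definition "wk k x = (\<Sum>a\<in>actions m. pol x a * a$k)"

lemma wk_le1: "wk k x \<le> 1"
proof -
  have "wk k x \<le> (\<Sum>a\<in>actions m. pol x a)"
    unfolding wk_def
  proof (rule sum_mono)
    fix a :: "real^'k" assume "a \<in> actions m"
    then have "a$k \<le> 1" using actions_coord[of a m k] by auto
    then show "pol x a * a$k \<le> pol x a" using pi_nn[of x a] by (simp add: mult_left_le)
  qed
  then show ?thesis using pi_sum by simp
qed

lemma wk_pos: "wk k x > 0" using wpos by (simp add: wk_def)

lemma wk_meas: "wk k \<in> borel_measurable borel"
proof -
  have "(\<lambda>x. pol x a) \<in> borel_measurable borel" for a
    using pi_m[of a] measurable_cong_sets[OF D_sets refl] by blast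
  then show ?thesis unfolding wk_def by measurable
qed

lemma S_quad: "v \<bullet> (second_moment D *v v) = (\<integral>x. (v \<bullet> x)^2 \<partial>D)"
  using quad_integral[of "\<lambda>_. 1" "second_moment D" v] by (simp add: second_moment_def)

lemma Sig_entry: "Sigma_tk Q k $ i $ j = (\<integral>x. wk k x * (x$i * x$j) \<partial>D)"
proof -
  have "Sigma_tk Q k $ i $ j = (\<integral>z. (snd z)$k * (fst z)$i * (fst z)$j \<partial>Q)"
    by (simp add: Sigma_tk_def)
  also have "\<dots> = (\<integral>x. (\<Sum>a\<in>actions m. pol x a * (a$k * x$i * x$j)) \<partial>D)"
  proof (rule Q_int2(2)[where B=1, of "\<lambda>z. (snd z)$k * (fst z)$i * (fst z)$j", simplified])
    fix x :: "real^'d" and a :: "real^'k" assume x: "norm x \<le> 1" and a: "a \<in> actions m"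
    have "\<bar>x$i\<bar> \<le> 1" "\<bar>x$j\<bar> \<le> 1" using component_le_norm_cart[of x] x by (meson order_trans)+
    moreover have "\<bar>a$k\<bar> \<le> 1" using actions_coord[OF a, of k] by auto
    ultimately show "\<bar>a$k * x$i * x$j\<bar> \<le> 1" by (simp add: abs_mult mult_le_one)
  qed
  also have "\<dots> = (\<integral>x. wk k x * (x$i * x$j) \<partial>D)"
    by (simp add: wk_def sum_distrib_right sum_distrib_left algebra_simps)
  finally show ?thesis .
qed

lemma Sig_quad: "v \<bullet> (Sigma_tk Q k *v v) = (\<integral>x. wk k x * (v \<bullet> x)^2 \<partial>D)"
  by (rule quad_integral[OF wk_meas _ Sig_entry]) (use wk_le1 wk_pos in \<open>simp add: abs_le_iff less_imp_le\<close>)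

lemma vx_bound: "norm x \<le> 1 \<Longrightarrow> (v \<bullet> x)^2 \<le> v \<bullet> v" for v x :: "real^'d"
proof -
  assume x: "norm x \<le> 1"
  have "(v \<bullet> x)^2 \<le> (v \<bullet> v) * (x \<bullet> x)" by (rule Cauchy_Schwarz_ineq)
  also have "x \<bullet> x \<le> 1" using x by (simp add: dot_square_norm power_le_one)
  then have "(v \<bullet> v) * (x \<bullet> x) \<le> v \<bullet> v" by (simp add: mult_left_le)
  finally show ?thesis .
qed

lemma int_vx:
  fixes h :: "real^'d \<Rightarrow> real"
  assumes hm: "h \<in> borel_measurable borel" and hb: "\<And>x. \<bar>h x\<bar> \<le> 1"
  shows "integrable D (\<lambda>x. h x * (v \<bullet> x)^2)"
proof (rule D_int[where B="v \<bullet> v"])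
  show "(\<lambda>x. h x * (v \<bullet> x)^2) \<in> borel_measurable borel" using hm by measurable
  fix x :: "real^'d" assume "norm x \<le> 1"
  then have "(v \<bullet> x)^2 \<le> v \<bullet> v" by (rule vx_bound)
  then show "\<bar>h x * (v \<bullet> x)^2\<bar> \<le> v \<bullet> v" using hb[of x]
    by (simp add: abs_mult) (metis abs_ge_zero mult_left_le_one_le order_trans zero_le_power2)
qed

lemma wk_abs: "\<bar>wk k x\<bar> \<le> 1" using wk_le1 wk_pos by (simp add: abs_le_iff less_imp_le)

lemma Sig_low: "v \<bullet> (Sigma_tk Q k *v v) \<ge> g0 * lam * (v \<bullet> v)"
proof -
  have "g0 * lam * (v \<bullet> v) \<le> g0 * (v \<bullet> (second_moment D *v v))"
    using lam_ray[of v] g0 by (simp add: mult.assoc mult_left_mono)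
  also have "\<dots> = (\<integral>x. g0 * (v \<bullet> x)^2 \<partial>D)" by (simp add: S_quad)
  also have "\<dots> \<le> (\<integral>x. wk k x * (v \<bullet> x)^2 \<partial>D)"
  proof (rule integral_mono)
    show "integrable D (\<lambda>x. g0 * (v \<bullet> x)^2)" using int_vx[of "\<lambda>_. 1" v] by simp
    show "integrable D (\<lambda>x. wk k x * (v \<bullet> x)^2)" by (rule int_vx[OF wk_meas wk_abs])
    show "g0 * (v \<bullet> x)^2 \<le> wk k x * (v \<bullet> x)^2" for x
      using wlow[of x k] by (simp add: wk_def mult_right_mono)
  qed
  also have "\<dots> = v \<bullet> (Sigma_tk Q k *v v)" by (simp add: Sig_quad)
  finally show ?thesis .
qed

lemma Sig_up: "v \<bullet> (Sigma_tk Q k *v v) \<le> v \<bullet> v"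
proof -
  have "v \<bullet> (Sigma_tk Q k *v v) = (\<integral>x. wk k x * (v \<bullet> x)^2 \<partial>D)" by (simp add: Sig_quad)
  also have "\<dots> \<le> (\<integral>x. v \<bullet> v \<partial>D)"
  proof (rule integral_mono_AE)
    show "integrable D (\<lambda>x. wk k x * (v \<bullet> x)^2)" by (rule int_vx[OF wk_meas wk_abs])
    show "integrable D (\<lambda>x. v \<bullet> v)" by simp
    show "AE x in D. wk k x * (v \<bullet> x)^2 \<le> v \<bullet> v"
      using D_bdd
    proof (rule eventually_mono)
      fix x :: "real^'d" assume "norm x \<le> 1"
      then have "(v \<bullet> x)^2 \<le> v \<bullet> v" by (rule vx_bound)
      moreover have "wk k x * (v \<bullet> x)^2 \<le> (v \<bullet> x)^2"
        using wk_le1[of k x] by (intro mult_left_le_one_le) (auto intro: less_imp_le wk_pos)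
      ultimately show "wk k x * (v \<bullet> x)^2 \<le> v \<bullet> v" by linarith
    qed
  qed
  also have "\<dots> = v \<bullet> v" by (simp add: PD.prob_space)
  finally show ?thesis .
qed

lemma Sig_pos: "v \<noteq> 0 \<Longrightarrow> v \<bullet> (Sigma_tk Q k *v v) > 0"
proof (rule ccontr)
  assume v: "v \<noteq> 0" and "\<not> v \<bullet> (Sigma_tk Q k *v v) > 0"
  then have le: "(\<integral>x. wk k x * (v \<bullet> x)^2 \<partial>D) \<le> 0" by (simp add: Sig_quad)
  have int: "integrable D (\<lambda>x. wk k x * (v \<bullet> x)^2)" by (rule int_vx[OF wk_meas wk_abs])
  have nn: "AE x in D. 0 \<le> wk k x * (v \<bullet> x)^2" using wk_pos by (intro AE_I2) (simp add: less_imp_le)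
  have "(\<integral>x. wk k x * (v \<bullet> x)^2 \<partial>D) \<ge> 0" using nn by (rule integral_nonneg_AE)
  with le have "(\<integral>x. wk k x * (v \<bullet> x)^2 \<partial>D) = 0" by simp
  then have "AE x in D. wk k x * (v \<bullet> x)^2 = 0" using integral_nonneg_eq_0_iff_AE[OF int nn] by simp
  then have ae: "AE x in D. (v \<bullet> x)^2 = 0" by (rule eventually_mono) (use wk_pos in \<open>simp add: less_imp_neq[symmetric]\<close>)
  have m0: "(\<lambda>x. (v \<bullet> x)^2) \<in> borel_measurable D" by (rule Dmeas) simp
  have "(\<integral>x. (v \<bullet> x)^2 \<partial>D) = (\<integral>x. 0 \<partial>D)"
    by (rule integral_cong_AE[OF m0 _ ae]) simp
  then have "v \<bullet> (second_moment D *v v) = 0" by (simp add: S_quad)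
  with Spd[OF v] show False by simp
qed

lemma Sig_sym: "transpose (Sigma_tk Q k) = Sigma_tk Q k"
  by (simp add: vec_eq_iff transpose_def Sigma_tk_def mult.commute mult.left_commute)

lemma Sig_inj: "Sigma_tk Q k *v v = 0 \<Longrightarrow> v = 0"
  using Sig_pos[of v k] by fastforce

lemma outer_mult: "outer x *v v = (x \<bullet> v) *\<^sub>R x" for x v :: "real^'d"
  by (simp add: vec_eq_iff outer_def matrix_vector_mult_def inner_vec_def sum_distrib_left algebra_simps)

lemma Gm_entry: "Gm k z $ i $ j = mat 1 $ i $ j - (snd z)$k / 2 * ((fst z)$i * (fst z)$j)"
  by (simp add: Gm_def outer_def)

lemma Gm_sym: "transpose (Gm k z) = Gm k z"
  by (simp add: vec_eq_iff transpose_def Gm_def outer_def mat_def mult.commute)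

lemma Gm_norm:
  fixes z :: "(real^'d) \<times> (real^'k)"
  assumes x: "norm (fst z) \<le> 1" and a: "snd z \<in> actions m"
  shows "norm (Gm k z *v v) \<le> norm v"
proof -
  have oq: "u \<bullet> (outer (fst z) *v u) = (u \<bullet> fst z)^2" for u
    unfolding outer_mult by (simp add: inner_commute power2_eq_square)
  have q: "u \<bullet> (Gm k z *v u) = u \<bullet> u - (snd z)$k / 2 * (u \<bullet> fst z)^2" for u
    using oq[of u] by (simp add: Gm_def matrix_vector_mult_diff_rdistrib scaleR_matrix_vector_assoc[symmetric] outer_mult
        inner_diff_right power2_eq_square inner_commute)
  have ak: "(snd z)$k = 0 \<or> (snd z)$k = 1" using actions_coord[OF a] .
  have "norm (Gm k z *v v) \<le> 1 * norm v"
  proof (rule sym_norm_bound[OF Gm_sym])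
    show "\<forall>u. 0 \<le> u \<bullet> (Gm k z *v u)"
    proof
      fix u :: "real^'d"
      have "(u \<bullet> fst z)^2 \<le> u \<bullet> u" by (rule vx_bound[OF x])
      moreover have "0 \<le> u \<bullet> u" by simp
      ultimately have h: "1 / 2 * (u \<bullet> fst z)^2 \<le> u \<bullet> u" by linarith
      from ak show "0 \<le> u \<bullet> (Gm k z *v u)"
      proof
        assume "snd z $ k = 0" then show ?thesis unfolding q by simp
      next
        assume "snd z $ k = 1" then show ?thesis unfolding q using h by simp
      qed
    qed
    show "\<forall>u. u \<bullet> (Gm k z *v u) \<le> 1 * (u \<bullet> u)"
      unfolding q using ak by auto
  qed simp
  then show ?thesis by simp
qed

definition "EGk k = mat 1 - (1/2) *\<^sub>R Sigma_tk Q k"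

lemma ent_bd: "norm x \<le> 1 \<Longrightarrow> a \<in> actions m \<Longrightarrow> \<bar>a$k * x$i * x$j\<bar> \<le> 1"
  for x :: "real^'d" and a :: "real^'k"
proof -
  assume x: "norm x \<le> 1" and a: "a \<in> actions m"
  have "\<bar>x$i\<bar> \<le> 1" "\<bar>x$j\<bar> \<le> 1" using component_le_norm_cart[of x] x by (meson order_trans)+
  moreover have "\<bar>a$k\<bar> \<le> 1" using actions_coord[OF a, of k] by auto
  ultimately show "\<bar>a$k * x$i * x$j\<bar> \<le> 1" by (simp add: abs_mult mult_le_one)
qed

lemma akxx_int: "integrable Q (\<lambda>z. (snd z)$k * (fst z)$i * (fst z)$j)"
  by (rule Q_int2(1)[where B=1]) (auto simp: ent_bd)

lemma Psetup_k: "Psetup Q k (EGk k)"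
proof (rule Psetup.intro)
  show "prob_space Q" by (rule Q_prob)
  show "(\<lambda>z. Gm k z $ i $ j) \<in> borel_measurable Q" for i j
    unfolding Gm_entry by (rule Q_meas) simp
  show int: "integrable Q (\<lambda>z. Gm k z $ i $ j)" for i j
    unfolding Gm_entry using akxx_int[of k i j] by (simp add: mult.assoc)
  show "(\<integral>z. Gm k z $ i $ j \<partial>Q) = EGk k $ i $ j" for i j
  proof -
    have "(\<integral>z. Gm k z $ i $ j \<partial>Q) = (\<integral>z. mat 1 $ i $ j - (1/2) * ((snd z)$k * (fst z)$i * (fst z)$j) \<partial>Q)"
      unfolding Gm_entry by (simp add: mult.assoc)
    also have "\<dots> = mat 1 $ i $ j - (1/2) * Sigma_tk Q k $ i $ j"
      using akxx_int[of k i j] by (simp add: Sigma_tk_def PQ.prob_space)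
    finally show ?thesis by (simp add: EGk_def)
  qed
  show "AE z in Q. \<forall>v. norm (Gm k z *v v) \<le> norm v"
    using QAE AE_space[of Q]
  proof eventually_elim
    case (elim z)
    then show ?case using Gm_norm[of z] by (auto simp: space_Q)
  qed
qed

end


lemma sum_mv: "finite S \<Longrightarrow> (\<Sum>n\<in>S. f n) *v v = (\<Sum>n\<in>S. f n *v v)"
  for f :: "nat \<Rightarrow> real^'d^'d"
  by (induction S rule: finite_induct) (simp_all add: matrix_vector_mult_add_rdistrib)

lemma mpow_Suc_apply: "mpow B (Suc n) *v v = mpow B n *v (B *v v)"
  by (metis mpow.simps(2) matrix_vector_mul_assoc)

lemma telescope:
  fixes B Sg :: "real^'d^'d"
  assumes "B = mat 1 - (1/2) *\<^sub>R Sg"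
  shows "((1/2) *\<^sub>R (mat 1 + (\<Sum>n\<in>{1..M}. mpow B n))) *v (Sg *v th) = th - mpow B (Suc M) *v th"
proof -
  have "2 *\<^sub>R B = 2 *\<^sub>R mat 1 - Sg" using assms by (simp add: scaleR_diff_right)
  then have Sg: "Sg = 2 *\<^sub>R (mat 1 - B)" by (simp add: scaleR_diff_right)
  define u where "u n = mpow B n *v th" for n
  have step: "mpow B n *v (th - B *v th) = u n - u (Suc n)" for n
    by (simp add: u_def matrix_vector_mult_diff_distrib mpow_Suc_apply del: mpow.simps)
  have "Sg *v th = 2 *\<^sub>R (th - B *v th)"
    by (simp add: Sg scaleR_matrix_vector_assoc[symmetric] matrix_vector_mult_diff_rdistrib)
  then have "((1/2) *\<^sub>R (mat 1 + (\<Sum>n\<in>{1..M}. mpow B n))) *v (Sg *v th)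
      = (mat 1 + (\<Sum>n\<in>{1..M}. mpow B n)) *v (th - B *v th)"
    by (simp add: scaleR_matrix_vector_assoc[symmetric] matrix_scaleR_vector_ac)
  also have "\<dots> = (th - B *v th) + (\<Sum>n\<in>{1..M}. u n - u (Suc n))"
    by (simp add: matrix_vector_mult_add_rdistrib sum_mv step)
  also have "\<dots> = (\<Sum>n<Suc M. u n - u (Suc n))"
  proof -
    have "{..<Suc M} = insert 0 {1..M}" by auto
    then have "(\<Sum>n<Suc M. u n - u (Suc n)) = (u 0 - u (Suc 0)) + (\<Sum>n\<in>{1..M}. u n - u (Suc n))"
      by simp
    moreover have "u 0 - u (Suc 0) = th - B *v th" by (simp add: u_def)
    ultimately show ?thesis by simp
  qed
  also have "\<dots> = u 0 - u (Suc M)" by (rule sum_lessThan_telescope')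
  also have "\<dots> = th - mpow B (Suc M) *v th" by (simp add: u_def)
  finally show ?thesis .
qed

lemma bilin:
  fixes gv :: "'a \<Rightarrow> real^'d" and Sm :: "'b \<Rightarrow> real^'d^'d"
  assumes M1: "prob_space M1" and M2: "prob_space M2"
    and gi: "\<And>j. integrable M1 (\<lambda>z. gv z $ j)" and ge: "\<And>j. (\<integral>z. gv z $ j \<partial>M1) = eg $ j"
    and si: "\<And>i j. integrable M2 (\<lambda>w. Sm w $ i $ j)" and se: "\<And>i j. (\<integral>w. Sm w $ i $ j \<partial>M2) = es $ i $ j"
  shows "integrable (M1 \<Otimes>\<^sub>M M2) (\<lambda>\<omega>. x \<bullet> (Sm (snd \<omega>) *v gv (fst \<omega>)))"
    "(\<integral>\<omega>. x \<bullet> (Sm (snd \<omega>) *v gv (fst \<omega>)) \<partial>(M1 \<Otimes>\<^sub>M M2)) = x \<bullet> (es *v eg)"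
proof -
  have sf1: "sigma_finite_measure M1" using M1 by (simp add: prob_space_imp_sigma_finite)
  have sf2: "sigma_finite_measure M2" using M2 by (simp add: prob_space_imp_sigma_finite)
  have pw: "x \<bullet> (Sm w *v g) = (\<Sum>i\<in>UNIV. \<Sum>j\<in>UNIV. (x$i * g$j) * Sm w $ i $ j)" for w g
    by (simp add: inner_vec_def matrix_vector_mult_def sum_distrib_left algebra_simps)
  have fi: "integrable M1 (\<lambda>z. x$i * gv z $ j)" for i j using gi by simp
  have ti: "integrable (M1 \<Otimes>\<^sub>M M2) (\<lambda>\<omega>. (x$i * gv (fst \<omega>) $ j) * Sm (snd \<omega>) $ i $ j)" for i j
    using prod_int(1)[OF sf1 sf2 fi si] .
  have tv: "(\<integral>\<omega>. (x$i * gv (fst \<omega>) $ j) * Sm (snd \<omega>) $ i $ j \<partial>(M1 \<Otimes>\<^sub>M M2)) = (x$i * eg$j) * es$i$j" for i j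
    using prod_int(2)[OF sf1 sf2 fi si] ge se by simp
  show "integrable (M1 \<Otimes>\<^sub>M M2) (\<lambda>\<omega>. x \<bullet> (Sm (snd \<omega>) *v gv (fst \<omega>)))"
    unfolding pw apply (rule Bochner_Integration.integrable_sum) apply (rule Bochner_Integration.integrable_sum) apply (rule ti) done
  have "(\<integral>\<omega>. x \<bullet> (Sm (snd \<omega>) *v gv (fst \<omega>)) \<partial>(M1 \<Otimes>\<^sub>M M2))
      = (\<Sum>i\<in>UNIV. \<Sum>j\<in>UNIV. (x$i * eg$j) * es$i$j)"
    unfolding pw using ti tv by (simp add: Bochner_Integration.integral_sum Bochner_Integration.integrable_sum)
  also have "\<dots> = x \<bullet> (es *v eg)"
    by (simp add: inner_vec_def matrix_vector_mult_def sum_distrib_left algebra_simps)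
  finally show "(\<integral>\<omega>. x \<bullet> (Sm (snd \<omega>) *v gv (fst \<omega>)) \<partial>(M1 \<Otimes>\<^sub>M M2)) = x \<bullet> (es *v eg)" .
qed

lemma inv_apply:
  fixes A :: "real^'n^'n"
  assumes "\<forall>v. A *v v = 0 \<longrightarrow> v = 0"
  shows "matrix_inv A *v (A *v u) = u"
proof -
  have "\<exists>B. B ** A = mat 1" using assms matrix_left_invertible_ker by blast
  then have "invertible A" using invertible_left_inverse by blast
  then have "\<exists>A'. A ** A' = mat 1 \<and> A' ** A = mat 1" unfolding invertible_def .
  then have "A ** matrix_inv A = mat 1 \<and> matrix_inv A ** A = mat 1"
    unfolding matrix_inv_def by (rule someI_ex)
  then show ?thesis by (simp add: matrix_vector_mul_assoc)
qed

context Msetup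
begin

interpretation PQ: prob_space Q by (rule Q_prob)

lemma gv_int:
  fixes th :: "real^'d"
  shows "integrable Q (\<lambda>z. (((fst z \<bullet> th) * (snd z)$k) *\<^sub>R fst z) $ j)"
    "(\<integral>z. (((fst z \<bullet> th) * (snd z)$k) *\<^sub>R fst z) $ j \<partial>Q) = (Sigma_tk Q k *v th) $ j"
proof -
  have pw: "(((fst z \<bullet> th) * (snd z)$k) *\<^sub>R fst z) $ j = (\<Sum>l\<in>UNIV. th$l * ((snd z)$k * (fst z)$j * (fst z)$l))" for z :: "(real^'d) \<times> (real^'k)"
    by (simp add: inner_vec_def sum_distrib_left sum_distrib_right algebra_simps)
  have ti: "integrable Q (\<lambda>z. th$l * ((snd z)$k * (fst z)$j * (fst z)$l))" for l
    using akxx_int[of k j l] by simp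
  show "integrable Q (\<lambda>z. (((fst z \<bullet> th) * (snd z)$k) *\<^sub>R fst z) $ j)"
    unfolding pw by (rule Bochner_Integration.integrable_sum) (rule ti)
  show "(\<integral>z. (((fst z \<bullet> th) * (snd z)$k) *\<^sub>R fst z) $ j \<partial>Q) = (Sigma_tk Q k *v th) $ j"
    unfolding pw using ti akxx_int
    by (simp add: Bochner_Integration.integral_sum matrix_vector_mult_def Sigma_tk_def mult.commute)
qed

lemma Sh_int:
  shows "integrable (PiM {1..M} (\<lambda>n. Q)) (\<lambda>w. Sigma_hat_plus M k w $ i $ j)"
    "(\<integral>w. Sigma_hat_plus M k w $ i $ j \<partial>PiM {1..M} (\<lambda>n. Q)) =
       ((1/2) *\<^sub>R (mat 1 + (\<Sum>n\<in>{1..M}. mpow (EGk k) n))) $ i $ j"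
proof -
  interpret PS: Psetup Q k "EGk k" by (rule Psetup_k)
  have pw: "Sigma_hat_plus M k w $ i $ j = (1/2) * (mat 1 $ i $ j + (\<Sum>n\<in>{1..M}. Cmat k w n $ i $ j))" for w
    by (simp add: Sigma_hat_plus_def sum_component)
  have ci: "integrable (PiM {1..M} (\<lambda>n. Q)) (\<lambda>w. Cmat k w n $ i $ j)" if "n \<in> {1..M}" for n
    using PS.Cmat_int[of "{1..M}" n i j] that by simp
  have ce: "(\<integral>w. Cmat k w n $ i $ j \<partial>PiM {1..M} (\<lambda>n. Q)) = mpow (EGk k) n $ i $ j" if "n \<in> {1..M}" for n
    using PS.Cmat_exp[of "{1..M}" n i j] that by simp
  have P: "prob_space (PiM {1..M} (\<lambda>n. Q))" by (rule PS.PiM_prob)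
  have i1: "integrable (PiM {1..M} (\<lambda>n. Q)) (\<lambda>w. \<Sum>n\<in>{1..M}. Cmat k w n $ i $ j)"
    by (rule Bochner_Integration.integrable_sum) (rule ci)
  have i0: "integrable (PiM {1..M} (\<lambda>n. Q)) (\<lambda>w. mat 1 $ i $ j :: real)"
    by (rule finite_measure.integrable_const[OF prob_space.finite_measure[OF P]])
  show "integrable (PiM {1..M} (\<lambda>n. Q)) (\<lambda>w. Sigma_hat_plus M k w $ i $ j)"
    unfolding pw using i0 i1 by (intro integrable_mult_right Bochner_Integration.integrable_add)
  have "(\<integral>w. Sigma_hat_plus M k w $ i $ j \<partial>PiM {1..M} (\<lambda>n. Q))
      = (1/2) * ((\<integral>w. mat 1 $ i $ j \<partial>PiM {1..M} (\<lambda>n. Q)) + (\<integral>w. (\<Sum>n\<in>{1..M}. Cmat k w n $ i $ j) \<partial>PiM {1..M} (\<lambda>n. Q)))"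
    unfolding pw using i0 i1 by (simp add: Bochner_Integration.integral_add)
  also have "\<dots> = (1/2) * (mat 1 $ i $ j + (\<Sum>n\<in>{1..M}. mpow (EGk k) n $ i $ j))"
    using ci ce prob_space.prob_space[OF P] by (simp add: Bochner_Integration.integral_sum)
  also have "\<dots> = ((1/2) *\<^sub>R (mat 1 + (\<Sum>n\<in>{1..M}. mpow (EGk k) n))) $ i $ j"
    by (simp add: sum_component)
  finally show "(\<integral>w. Sigma_hat_plus M k w $ i $ j \<partial>PiM {1..M} (\<lambda>n. Q)) =
       ((1/2) *\<^sub>R (mat 1 + (\<Sum>n\<in>{1..M}. mpow (EGk k) n))) $ i $ j" .
qed

lemma main_int:
  fixes th :: "'k \<Rightarrow> real^'d" and x :: "real^'d" and Aa :: "real^'k" and M :: nat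
  shows "(\<integral>\<omega>. (\<Sum>k\<in>UNIV.
              (x \<bullet> (matrix_inv (Sigma_tk Q k) *v (((fst (fst \<omega>) \<bullet> th k) * (snd (fst \<omega>))$k) *\<^sub>R fst (fst \<omega>))
                   - Sigma_hat_plus M k (snd \<omega>) *v (((fst (fst \<omega>) \<bullet> th k) * (snd (fst \<omega>))$k) *\<^sub>R fst (fst \<omega>))))
              * Aa$k)
           \<partial>(Q \<Otimes>\<^sub>M (\<Pi>\<^sub>M n\<in>{1..M}. Q)))
     = (\<Sum>k\<in>UNIV. Aa$k * (x \<bullet> (mpow (EGk k) (Suc M) *v th k)))"
proof -
  let ?P = "\<Pi>\<^sub>M n\<in>{1..M}. Q"
  have P: "prob_space ?P" by (rule Psetup.PiM_prob[OF Psetup_k])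
  have QP: "prob_space Q" by (rule Q_prob)
  define gv where "gv k z = (((fst z \<bullet> th k) * (snd z)$k) *\<^sub>R fst z)" for k z
  define R where "R k = matrix_inv (Sigma_tk Q k)" for k
  define ES where "ES k = (1/2) *\<^sub>R (mat 1 + (\<Sum>n\<in>{1..M}. mpow (EGk k) n))" for k
  have gi: "integrable Q (\<lambda>z. gv k z $ j)" for k j unfolding gv_def by (rule gv_int(1))
  have ge: "(\<integral>z. gv k z $ j \<partial>Q) = (Sigma_tk Q k *v th k) $ j" for k j unfolding gv_def by (rule gv_int(2))
  have ri: "integrable ?P (\<lambda>w. R k $ i $ j)" for k i j
    by (rule finite_measure.integrable_const[OF prob_space.finite_measure[OF P]])
  have re: "(\<integral>w. R k $ i $ j \<partial>?P) = R k $ i $ j" for k i j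
    using prob_space.prob_space[OF P] by simp
  have si: "integrable ?P (\<lambda>w. Sigma_hat_plus M k w $ i $ j)" for k i j by (rule Sh_int(1))
  have se: "(\<integral>w. Sigma_hat_plus M k w $ i $ j \<partial>?P) = ES k $ i $ j" for k i j
    unfolding ES_def by (rule Sh_int(2))
  have i1: "integrable (Q \<Otimes>\<^sub>M ?P) (\<lambda>\<omega>. x \<bullet> (R k *v gv k (fst \<omega>)))" for k
    using bilin(1)[OF QP P gi[of k] ge[of k] ri[of k] re[of k], where x=x] by simp
  have e1: "(\<integral>\<omega>. x \<bullet> (R k *v gv k (fst \<omega>)) \<partial>(Q \<Otimes>\<^sub>M ?P)) = x \<bullet> (R k *v (Sigma_tk Q k *v th k))" for k
    using bilin(2)[OF QP P gi[of k] ge[of k] ri[of k] re[of k], where x=x] by simp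
  have i2: "integrable (Q \<Otimes>\<^sub>M ?P) (\<lambda>\<omega>. x \<bullet> (Sigma_hat_plus M k (snd \<omega>) *v gv k (fst \<omega>)))" for k
    using bilin(1)[OF QP P gi[of k] ge[of k] si[of k] se[of k], where x=x] by simp
  have e2: "(\<integral>\<omega>. x \<bullet> (Sigma_hat_plus M k (snd \<omega>) *v gv k (fst \<omega>)) \<partial>(Q \<Otimes>\<^sub>M ?P)) = x \<bullet> (ES k *v (Sigma_tk Q k *v th k))" for k
    using bilin(2)[OF QP P gi[of k] ge[of k] si[of k] se[of k], where x=x] by simp
  have pw: "(\<Sum>k\<in>UNIV.
              (x \<bullet> (matrix_inv (Sigma_tk Q k) *v (((fst (fst \<omega>) \<bullet> th k) * (snd (fst \<omega>))$k) *\<^sub>R fst (fst \<omega>))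
                   - Sigma_hat_plus M k (snd \<omega>) *v (((fst (fst \<omega>) \<bullet> th k) * (snd (fst \<omega>))$k) *\<^sub>R fst (fst \<omega>))))
              * Aa$k)
      = (\<Sum>k\<in>UNIV. Aa$k * (x \<bullet> (R k *v gv k (fst \<omega>))) - Aa$k * (x \<bullet> (Sigma_hat_plus M k (snd \<omega>) *v gv k (fst \<omega>))))" for \<omega>
    unfolding R_def gv_def by (simp add: inner_diff_right algebra_simps)
  have ik: "integrable (Q \<Otimes>\<^sub>M ?P) (\<lambda>\<omega>. Aa$k * (x \<bullet> (R k *v gv k (fst \<omega>))) - Aa$k * (x \<bullet> (Sigma_hat_plus M k (snd \<omega>) *v gv k (fst \<omega>))))" for k
    using i1[of k] i2[of k] by (intro Bochner_Integration.integrable_diff integrable_mult_right)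
  have "(\<integral>\<omega>. (\<Sum>k\<in>UNIV. Aa$k * (x \<bullet> (R k *v gv k (fst \<omega>))) - Aa$k * (x \<bullet> (Sigma_hat_plus M k (snd \<omega>) *v gv k (fst \<omega>)))) \<partial>(Q \<Otimes>\<^sub>M ?P))
     = (\<Sum>k\<in>UNIV. Aa$k * (x \<bullet> (R k *v (Sigma_tk Q k *v th k))) - Aa$k * (x \<bullet> (ES k *v (Sigma_tk Q k *v th k))))"
    using ik i1 i2 e1 e2 by (simp add: Bochner_Integration.integral_sum Bochner_Integration.integral_diff)
  also have "\<dots> = (\<Sum>k\<in>UNIV. Aa$k * (x \<bullet> (mpow (EGk k) (Suc M) *v th k)))"
  proof (rule sum.cong[OF refl])
    fix k
    have "R k *v (Sigma_tk Q k *v th k) = th k"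
      unfolding R_def by (rule inv_apply) (use Sig_inj in blast)
    moreover have "ES k *v (Sigma_tk Q k *v th k) = th k - mpow (EGk k) (Suc M) *v th k"
      unfolding ES_def by (rule telescope) (simp add: EGk_def)
    ultimately show "Aa$k * (x \<bullet> (R k *v (Sigma_tk Q k *v th k))) - Aa$k * (x \<bullet> (ES k *v (Sigma_tk Q k *v th k)))
        = Aa$k * (x \<bullet> (mpow (EGk k) (Suc M) *v th k))"
      by (simp add: inner_diff_right right_diff_distrib del: mpow.simps)
  qed
  finally show ?thesis unfolding pw .
qed

lemma c_nonneg: "g0 * lam \<le> 1"
proof -
  define v :: "real^'d" where "v = axis undefined 1"
  have vv: "v \<bullet> v = 1" by (simp add: v_def inner_axis_axis)
  show ?thesis using Sig_low[of v undefined] Sig_up[of v undefined] vv by simp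
qed

lemma EG_norm: "norm (EGk k *v v) \<le> (1 - g0 * lam / 2) * norm v"
proof (rule sym_norm_bound)
  show "transpose (EGk k) = EGk k"
    using Sig_sym[of k] unfolding EGk_def
    by (simp add: vec_eq_iff transpose_def mat_def)
  show "0 \<le> 1 - g0 * lam / 2" using c_nonneg by simp
  have q: "u \<bullet> (EGk k *v u) = u \<bullet> u - (1/2) * (u \<bullet> (Sigma_tk Q k *v u))" for u
    by (simp add: EGk_def matrix_vector_mult_diff_rdistrib scaleR_matrix_vector_assoc[symmetric] inner_diff_right)
  show "\<forall>u. 0 \<le> u \<bullet> (EGk k *v u)"
  proof
    fix u :: "real^'d"
    have "u \<bullet> (Sigma_tk Q k *v u) \<le> u \<bullet> u" by (rule Sig_up)
    moreover have "0 \<le> u \<bullet> u" by simp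
    ultimately show "0 \<le> u \<bullet> (EGk k *v u)" unfolding q by linarith
  qed
  show "\<forall>u. u \<bullet> (EGk k *v u) \<le> (1 - g0 * lam / 2) * (u \<bullet> u)"
    unfolding q using Sig_low[of _ k] by (simp add: algebra_simps)
qed

lemma mpow_norm: "norm (mpow (EGk k) n *v v) \<le> (1 - g0 * lam / 2)^n * norm v"
proof (induction n arbitrary: v)
  case 0 then show ?case by simp
next
  case (Suc n)
  have "norm (mpow (EGk k) (Suc n) *v v) = norm (mpow (EGk k) n *v (EGk k *v v))"
    by (simp only: mpow_Suc_apply)
  also have "\<dots> \<le> (1 - g0 * lam / 2)^n * norm (EGk k *v v)" by (rule Suc.IH)
  also have "\<dots> \<le> (1 - g0 * lam / 2)^n * ((1 - g0 * lam / 2) * norm v)"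
    using EG_norm c_nonneg by (intro mult_left_mono) auto
  finally show ?case by (simp add: algebra_simps)
qed

lemma bias_bound:
  assumes "norm x \<le> 1" "norm th \<le> 1"
  shows "\<bar>x \<bullet> (mpow (EGk k) n *v th)\<bar> \<le> (1 - g0 * lam / 2)^n"
proof -
  have c: "0 \<le> (1 - g0 * lam / 2)^n" using c_nonneg by simp
  have "\<bar>x \<bullet> (mpow (EGk k) n *v th)\<bar> \<le> norm x * norm (mpow (EGk k) n *v th)" by (rule Cauchy_Schwarz_ineq2)
  also have "\<dots> \<le> 1 * ((1 - g0 * lam / 2)^n * 1)"
    using assms mpow_norm[of k n th] c by (intro mult_mono) (auto intro: order_trans mult_left_le)
  finally show ?thesis by simp
qed

end


lemma basis_eq: "(basis_actions :: (real^'k::finite) set) = range (\<lambda>k. axis k 1)"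
  by (auto simp: basis_actions_def)

lemma axis_inj: "inj (\<lambda>k::'k::finite. (axis k 1 :: real^'k))"
  by (rule injI) (simp add: axis_eq_axis)

lemma sum_basis:
  assumes "1 \<le> m"
  shows "(\<Sum>a\<in>actions m. (if a \<in> basis_actions then f a else 0)) = (\<Sum>k\<in>UNIV. f (axis k 1 :: real^'k::finite))"
proof -
  have sub: "(basis_actions :: (real^'k) set) \<subseteq> actions m"
    using axis_in_actions[OF assms] by (auto simp: basis_eq)
  have "(\<Sum>a\<in>actions m. (if a \<in> basis_actions then f a else 0)) = (\<Sum>a\<in>actions m \<inter> basis_actions. f a)"
    by (rule sum.inter_restrict[OF finite_actions, symmetric])
  also have "actions m \<inter> basis_actions = (basis_actions :: (real^'k) set)" using sub by auto
  also have "(\<Sum>a\<in>basis_actions. f a) = (\<Sum>k\<in>UNIV. f (axis k 1 :: real^'k))"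
    unfolding basis_eq by (simp add: sum.reindex[OF axis_inj])
  finally show ?thesis .
qed


theorem lemma2:
  fixes D :: "(real^'d) measure"
    and m T t :: nat
    and Xs :: "nat \<Rightarrow> real^'d"
    and th :: "nat \<Rightarrow> 'k::finite \<Rightarrow> real^'d"
    and theta :: "'k \<Rightarrow> real^'d"
    and p :: "real^'d \<Rightarrow> real^'k \<Rightarrow> real"
    and x :: "real^'d"
  defines "lam \<equiv> lambda_min (second_moment D)"
  defines "eta \<equiv> eta_t lam m T Xs th t"
  defines "gam \<equiv> alpha_t lam CARD('k) t * eta"
  defines "M \<equiv> M_t lam CARD('k) t eta"
  defines "Q \<equiv> pair_law D m (mix_policy gam p)"
  assumes K2: "CARD('k) \<ge> 2"
    and m_pos: "1 \<le> m" and m_lt: "m < CARD('k)"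
    and T3: "T \<ge> 3"
    and t_range: "t \<in> {1..T}"
    and D_prob: "prob_space D" and D_sets: "sets D = sets borel"
    and D_bdd: "AE y in D. norm y \<le> 1"
    and Sigma_pd: "\<forall>v. v \<noteq> 0 \<longrightarrow> v \<bullet> (second_moment D *v v) > 0"
    and c1_ge: "c1 lam CARD('d) CARD('k) m T \<ge> 1"
    and theta_bdd: "\<forall>k. norm (theta k) \<le> 1"
    and p_nonneg: "\<forall>y a. p y a \<ge> 0"
    and p_supp: "\<forall>y a. a \<notin> actions m \<longrightarrow> p y a = 0"
    and p_sum: "\<forall>y. (\<Sum>a\<in>actions m. p y a) = 1"
    and p_mean: "\<forall>y. (\<Sum>a\<in>actions m. p y a *\<^sub>R a) = abar m th t eta y"
    and p_meas: "\<forall>a. (\<lambda>y. p y a) \<in> borel_measurable borel"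
    and x_bdd: "norm x \<le> 1"
  shows "Max ((\<lambda>A. \<integral>\<omega>. (\<Sum>k\<in>UNIV.
              (x \<bullet> (matrix_inv (Sigma_tk Q k) *v (((fst (fst \<omega>) \<bullet> theta k) * (snd (fst \<omega>))$k) *\<^sub>R fst (fst \<omega>))
                   - Sigma_hat_plus M k (snd \<omega>) *v (((fst (fst \<omega>) \<bullet> theta k) * (snd (fst \<omega>))$k) *\<^sub>R fst (fst \<omega>))))
              * A$k)
           \<partial>(Q \<Otimes>\<^sub>M (\<Pi>\<^sub>M n\<in>{1..M}. Q))) ` actions m)
         \<le> real m / (real t)^2"
proof -
  let ?K = "CARD('k)"
  have Kpos: "real ?K > 0" by simp
  have t1: "1 \<le> t" "t \<le> T" using t_range by auto
  define S where "S = second_moment D"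
  have Ssym: "transpose S = S"
    by (simp add: S_def second_moment_def vec_eq_iff transpose_def mult.commute)
  have lam_pos: "lam > 0" and lam_ray: "\<And>v. lam * (v \<bullet> v) \<le> v \<bullet> (S *v v)"
    using lambda_min_props[OF Ssym] Sigma_pd unfolding lam_def S_def by auto
  have lnT: "ln (real T) > 0" using T3 by simp
  have lnt: "ln (real t) \<ge> 0" using t1 by simp
  have lntT: "ln (real t) \<le> ln (real T)" using t1 by simp
  define \<beta> where "\<beta> = beta_of lam ?K T (fst (bstate lam m T Xs th (t - 1)))"
  have eta_eq: "eta = 1 / \<beta>" by (simp add: eta_def eta_t_def \<beta>_def)
  have \<beta>2: "\<beta> \<ge> 2" unfolding \<beta>_def beta_of_def by simp
  have \<beta>c: "\<beta> \<ge> 8 * real ?K / lam * ln (real T)" unfolding \<beta>_def beta_of_def c2_def by simp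
  have eta_pos: "eta > 0" using \<beta>2 eta_eq by simp
  have gam_eq: "gam = 4 * real ?K * ln (real t) / lam / \<beta>" by (simp add: gam_def alpha_t_def eta_eq)
  have gam_nn: "gam \<ge> 0" using lnt lam_pos \<beta>2 by (simp add: gam_eq)
  have gam_half: "gam \<le> 1/2"
  proof -
    have "4 * real ?K * ln (real t) / lam \<le> 4 * real ?K * ln (real T) / lam"
      using lntT lam_pos by (simp add: divide_right_mono)
    also have "\<dots> = (8 * real ?K / lam * ln (real T)) / 2" by simp
    also have "\<dots> \<le> \<beta> / 2" using \<beta>c by simp
    finally have "4 * real ?K * ln (real t) / lam \<le> \<beta> / 2" .
    then have "4 * real ?K * ln (real t) / lam / \<beta> \<le> (\<beta> / 2) / \<beta>"
      using \<beta>2 by (intro divide_right_mono) auto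
    also have "(\<beta> / 2) / \<beta> = 1 / 2" using \<beta>2 by simp
    finally show ?thesis by (simp add: gam_eq)
  qed
  define pol where "pol = mix_policy gam p"
  have pol_eq: "pol y a = (1 - gam) * p y a + gam * (if a \<in> basis_actions then 1 / real ?K else 0)" for y a
    by (simp add: pol_def mix_policy_def)
  have pol_nn: "pol y a \<ge> 0" for y a using p_nonneg gam_nn gam_half by (simp add: pol_eq)
  have sumK: "(\<Sum>k\<in>(UNIV::'k set). (1::real) / real ?K) = 1" by simp
  have pol_sum: "(\<Sum>a\<in>actions m. pol y a) = 1" for y
  proof -
    have "(\<Sum>a\<in>actions m. pol y a) = (1 - gam) * (\<Sum>a\<in>actions m. p y a)
        + gam * (\<Sum>a\<in>(actions m :: (real^'k) set). if a \<in> basis_actions then 1 / real ?K else 0)"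
      by (simp add: pol_eq sum.distrib sum_distrib_left)
    also have "(\<Sum>a\<in>(actions m :: (real^'k) set). if a \<in> basis_actions then 1 / real ?K else 0) = 1"
      using sum_basis[OF m_pos, of "\<lambda>a::real^'k. 1 / real ?K"] by simp
    finally show ?thesis using p_sum by simp
  qed
  have pol_m: "(\<lambda>y. pol y a) \<in> borel_measurable D" for a
  proof -
    have pm: "(\<lambda>y. p y a) \<in> borel_measurable borel" using p_meas by simp
    have "(\<lambda>y. pol y a) \<in> borel_measurable borel" unfolding pol_eq using pm by measurable
    then show ?thesis using measurable_cong_sets[OF D_sets refl] by blast
  qed
  have abar_k: "(\<Sum>a\<in>actions m. p y a * a$k) = abar m th t eta y $ k" for y k
  proof -
    have "(\<Sum>a\<in>actions m. p y a *\<^sub>R a) $ k = abar m th t eta y $ k" using p_mean by simp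
    then show ?thesis by (simp add: sum_component)
  qed
  have w_eq: "(\<Sum>a\<in>actions m. pol y a * a$k) = (1 - gam) * abar m th t eta y $ k + gam / real ?K" for y k
  proof -
    have "(\<Sum>a\<in>actions m. pol y a * a$k) = (1 - gam) * (\<Sum>a\<in>actions m. p y a * a$k)
        + gam * (\<Sum>a\<in>(actions m :: (real^'k) set). if a \<in> basis_actions then a$k / real ?K else 0)"
    proof -
      have "(\<Sum>a\<in>actions m. pol y a * a$k) = (\<Sum>a\<in>actions m. (1 - gam) * (p y a * a$k)
          + gam * (if a \<in> basis_actions then a$k / real ?K else 0))"
        by (rule sum.cong) (auto simp: pol_eq algebra_simps)
      also have "\<dots> = (1 - gam) * (\<Sum>a\<in>actions m. p y a * a$k)
          + gam * (\<Sum>a\<in>(actions m :: (real^'k) set). if a \<in> basis_actions then a$k / real ?K else 0)"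
        by (simp add: sum.distrib sum_distrib_left)
      finally show ?thesis .
    qed
    also have "(\<Sum>a\<in>(actions m :: (real^'k) set). if a \<in> basis_actions then a$k / real ?K else 0) = 1 / real ?K"
      using sum_basis[OF m_pos, of "\<lambda>a::real^'k. a$k / real ?K"] by (simp add: axis_def if_distrib[of "\<lambda>z. z / real ?K"] sum.delta cong: if_cong)
    finally show ?thesis using abar_k by simp
  qed
  have wpos: "(\<Sum>a\<in>actions m. pol y a * a$k) > 0" for y k
  proof -
    have "abar m th t eta y $ k > 0" by (rule abar_pos[OF m_pos eta_pos])
    moreover have "1 - gam > 0" using gam_half by simp
    ultimately have "(1 - gam) * abar m th t eta y $ k > 0" by simp
    moreover have "gam / real ?K \<ge> 0" using gam_nn by simp
    ultimately show ?thesis unfolding w_eq by linarith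
  qed
  have wlow: "(\<Sum>a\<in>actions m. pol y a * a$k) \<ge> gam / real ?K" for y k
  proof -
    have "abar m th t eta y $ k > 0" by (rule abar_pos[OF m_pos eta_pos])
    moreover have "1 - gam > 0" using gam_half by simp
    ultimately have "(1 - gam) * abar m th t eta y $ k \<ge> 0" by simp
    then show ?thesis unfolding w_eq by linarith
  qed
  have QS: "Qsetup D (actions m) pol"
    by (rule Qsetup.intro) (use D_prob finite_actions pol_nn pol_sum pol_m in auto)
  have MSa: "Msetup_axioms D m pol (gam / real ?K) lam"
    by (rule Msetup_axioms.intro) (use D_sets D_bdd wpos wlow gam_nn lam_ray Sigma_pd S_def in auto)
  interpret MS: Msetup D m pol "gam / real ?K" lam by (rule Msetup.intro[OF QS MSa])
  have "MS.Q = density (D \<Otimes>\<^sub>M count_space (actions m)) (\<lambda>(x, a). ennreal (pol x a))"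
    by (rule MS.Q_def)
  then have Qeq: "Q = MS.Q" unfolding Q_def pair_law_def pol_def by simp
  define c where "c = 1 - gam / real ?K * lam / 2"
  have c01: "0 \<le> c" "c \<le> 1" using MS.c_nonneg gam_nn lam_pos by (auto simp: c_def)
  have cM: "c ^ Suc M \<le> 1 / (real t)^2"
  proof (cases "t = 1")
    case True
    have "c ^ Suc M \<le> 1" using c01 by (rule power_le_one)
    then show ?thesis using True by simp
  next
    case False
    then have t2: "t \<ge> 2" using t1 by simp
    have lnt_pos: "ln (real t) > 0" using t2 by simp
    have gam_pos: "gam > 0" using lnt_pos lam_pos \<beta>2 by (simp add: gam_eq)
    have Meq: "M = nat \<lceil>4 * real ?K * ln (real t) / (gam * lam)\<rceil>"
      using False by (simp add: M_def M_t_def gam_def)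
    have Mge: "real M \<ge> 4 * real ?K * ln (real t) / (gam * lam)"
      unfolding Meq by linarith
    define y where "y = gam * lam / (2 * real ?K)"
    have y_pos: "y > 0" using gam_pos lam_pos by (simp add: y_def)
    have cy: "c = 1 - y" by (simp add: c_def y_def)
    have c_exp: "c \<le> exp (- y)" using exp_ge_add_one_self[of "-y"] cy by simp
    have yM: "y * real M \<ge> 2 * ln (real t)"
    proof -
      have "y * real M \<ge> y * (4 * real ?K * ln (real t) / (gam * lam))"
        using mult_left_mono[OF Mge, of y] y_pos by simp
      also have "y * (4 * real ?K * ln (real t) / (gam * lam)) = 2 * ln (real t)"
        using gam_pos lam_pos by (simp add: y_def field_simps)
      finally show ?thesis .
    qed
    have "c ^ Suc M \<le> c ^ M" using c01 by (simp add: mult_left_le_one_le)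
    also have "\<dots> \<le> exp (- y) ^ M" by (rule power_mono[OF c_exp c01(1)])
    also have "\<dots> = exp (- (y * real M))" by (simp add: exp_of_nat_mult[symmetric] mult.commute)
    also have "\<dots> \<le> exp (- (2 * ln (real t)))" using yM by simp
    also have "\<dots> = 1 / (real t)^2"
    proof -
      have "exp (2 * ln (real t)) = exp (ln (real t)) ^ 2" using exp_of_nat_mult[of 2 "ln (real t)"] by simp
      also have "\<dots> = (real t)^2" using t1 by simp
      finally show ?thesis by (simp add: exp_minus field_simps)
    qed
    finally show ?thesis .
  qed
  have fin: "finite (actions m :: (real^'k) set)" by (rule finite_actions)
  have ne: "actions m \<noteq> ({} :: (real^'k) set)" using actions_nonempty by blast
  show ?thesis
    unfolding Qeq
  proof (subst Max_le_iff, simp add: fin, simp add: ne, intro ballI, elim imageE)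
    fix r and A :: "real^'k"
    assume A: "A \<in> actions m" and r: "r = (\<integral>\<omega>. (\<Sum>k\<in>UNIV.
              (x \<bullet> (matrix_inv (Sigma_tk MS.Q k) *v (((fst (fst \<omega>) \<bullet> theta k) * (snd (fst \<omega>))$k) *\<^sub>R fst (fst \<omega>))
                   - Sigma_hat_plus M k (snd \<omega>) *v (((fst (fst \<omega>) \<bullet> theta k) * (snd (fst \<omega>))$k) *\<^sub>R fst (fst \<omega>))))
              * A$k)
           \<partial>(MS.Q \<Otimes>\<^sub>M (\<Pi>\<^sub>M n\<in>{1..M}. MS.Q)))"
    have "r = (\<Sum>k\<in>UNIV. A$k * (x \<bullet> (mpow (MS.EGk k) (Suc M) *v theta k)))"
      unfolding r by (rule MS.main_int)
    also have "\<dots> \<le> (\<Sum>k\<in>UNIV. A$k * (1 / (real t)^2))"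
    proof (rule sum_mono)
      fix k
      have Ak: "A$k \<ge> 0" using actions_coord[OF A, of k] by auto
      have "x \<bullet> (mpow (MS.EGk k) (Suc M) *v theta k) \<le> c ^ Suc M"
        using MS.bias_bound[OF x_bdd, of "theta k" k "Suc M"] theta_bdd by (simp add: c_def)
      also have "\<dots> \<le> 1 / (real t)^2" by (rule cM)
      finally show "A$k * (x \<bullet> (mpow (MS.EGk k) (Suc M) *v theta k)) \<le> A$k * (1 / (real t)^2)"
        using Ak by (intro mult_left_mono)
    qed
    also have "\<dots> = (\<Sum>k\<in>UNIV. A$k) / (real t)^2" by (simp add: sum_divide_distrib)
    also have "\<dots> \<le> real m / (real t)^2"
      using A by (intro divide_right_mono) (auto simp: actions_def)
    finally show "r \<le> real m / (real t)^2" .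
  qed
qed


end
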